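(* Let $M$ be a structure and let $(\bar a_i,\bar b_i : i\in\mathbb Q)$ be a family of tuples in $M$ (all $\bar a_i$ of the same length, all $\bar b_i$ of the same length) which, viewed as indexed by $G_*$, is $L^*$-indiscernible. Then either the two sequences $(\bar a_i : i\in\mathbb Q)$ and $(\bar b_i : i\in\mathbb Q)$ are mutually indiscernible, or there is a formula $\phi(\bar x;\bar y)$ with parameters from $\{\bar a_i,\bar b_i : i\in\mathbb Q\}$, where $|\bar x|=|\bar a_i|$ and $|\bar y|=|\bar b_i|$, which has the independence property.
   Context: Let $L^*=\{U,\le_U,V,\le_V,R\}$ with $U,V$ unary and $\le_U,\le_V,R$ binary. An ordered bipartite graph is an $L^*$-structure $G$ in which $U,V$ partition the domain, $\le_U\subseteq U^2$ and $\le_V\subseteq V^2$ are linear orders on $U(G)$ and $V(G)$ respectively, and $R\subseteq U\times V$. $G_*$ denotes the random ordered bipartite graph, i.e. the countable Fraïssé limit of the class of finite ordered bipartite graphs; $(U(G_* ),\le_U)$ and $(V(G_* ),\le_V)$ are countable dense linear orders without endpoints, and we fix identifications of each with $(\mathbb Q,\le)$. A family $(\bar a_i,\bar b_i : i\in\mathbb Q)$ is viewed as indexed by $G_*$ by sending $i\in U(G_* )\cong\mathbb Q$ to $\bar a_i$ and $j\in V(G_* )\cong\mathbb Q$ to $\bar b_j$. For an $L^*$-structure $I$, a family $(\bar c_t : t\in I)$ in an $L$-structure $M$ is $L^*$-indiscernible if whenever $(t_1,\dots,t_n)$ and $(s_1,\dots,s_n)$ have the same quantifier-free $L^*$-type in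 $I$, the tuples $(\bar c_{t_1},\dots,\bar c_{t_n})$ and $(\bar c_{s_1},\dots,\bar c_{s_n})$ have the same $L$-type in $M$. Two sequences $(\bar a_i:i\in\mathbb Q)$ and $(\bar b_i:i\in\mathbb Q)$ are mutually indiscernible if each is an order-indiscernible sequence over the set of parameters appearing in the other. A formula $\phi(\bar x;\bar y)$ (possibly with parameters from $M$) has the independence property if in some elementary extension of $M$ there are $(\bar c_i:i\in\omega)$ and $(\bar d_S:S\subseteq\omega)$ with $\models\phi(\bar c_i;\bar d_S)\iff i\in S$. *)

theory Defs
  imports Main "HOL.Rat"
begin

datatype 'f trm = Var nat | Fn 'f "'f trm list"

datatype ('f, 'r) fm =
    Bot
  | Eq "'f trm" "'f trm"
  | Rel 'r "'f trm list"
  | Neg "('f, 'r) fm"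
  | Conj "('f, 'r) fm" "('f, 'r) fm"
  | Ex nat "('f, 'r) fm"

record ('a, 'f, 'r) struc =
  dom :: "'a set"
  funs :: "'f \<Rightarrow> 'a list \<Rightarrow> 'a"
  rels :: "'r \<Rightarrow> 'a list \<Rightarrow> bool"

type_synonym ('f, 'r) lang = "('f \<Rightarrow> nat) \<times> ('r \<Rightarrow> nat)"

fun wf_trm :: "('f \<Rightarrow> nat) \<Rightarrow> 'f trm \<Rightarrow> bool" where
  "wf_trm fa (Var n) = True"
| "wf_trm fa (Fn f ts) = (length ts = fa f \<and> (\<forall>t\<in>set ts. wf_trm fa t))"

fun wf_fm :: "('f, 'r) lang \<Rightarrow> ('f, 'r) fm \<Rightarrow> bool" where
  "wf_fm L Bot = True"
| "wf_fm L (Eq s t) = (wf_trm (fst L) s \<and> wf_trm (fst L) t)"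
| "wf_fm L (Rel r ts) = (length ts = snd L r \<and> (\<forall>t\<in>set ts. wf_trm (fst L) t))"
| "wf_fm L (Neg \<phi>) = wf_fm L \<phi>"
| "wf_fm L (Conj \<phi> \<psi>) = (wf_fm L \<phi> \<and> wf_fm L \<psi>)"
| "wf_fm L (Ex n \<phi>) = wf_fm L \<phi>"

fun fv_trm :: "'f trm \<Rightarrow> nat set" where
  "fv_trm (Var n) = {n}"
| "fv_trm (Fn f ts) = (\<Union>t\<in>set ts. fv_trm t)"

fun fv :: "('f, 'r) fm \<Rightarrow> nat set" where
  "fv Bot = {}"
| "fv (Eq s t) = fv_trm s \<union> fv_trm t"
| "fv (Rel r ts) = (\<Union>t\<in>set ts. fv_trm t)"
| "fv (Neg \<phi>) = fv \<phi>"
| "fv (Conj \<phi> \<psi>) = fv \<phi> \<union> fv \<psi>"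
| "fv (Ex n \<phi>) = fv \<phi> - {n}"

fun tval :: "('a, 'f, 'r, 'z) struc_scheme \<Rightarrow> (nat \<Rightarrow> 'a) \<Rightarrow> 'f trm \<Rightarrow> 'a" where
  "tval M e (Var n) = e n"
| "tval M e (Fn f ts) = funs M f (map (tval M e) ts)"

fun sat :: "('a, 'f, 'r, 'z) struc_scheme \<Rightarrow> (nat \<Rightarrow> 'a) \<Rightarrow> ('f, 'r) fm \<Rightarrow> bool" where
  "sat M e Bot = False"
| "sat M e (Eq s t) = (tval M e s = tval M e t)"
| "sat M e (Rel r ts) = rels M r (map (tval M e) ts)"
| "sat M e (Neg \<phi>) = (\<not> sat M e \<phi>)"
| "sat M e (Conj \<phi> \<psi>) = (sat M e \<phi> \<and> sat M e \<psi>)"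
| "sat M e (Ex n \<phi>) = (\<exists>x\<in>dom M. sat M (e(n := x)) \<phi>)"

definition is_struc :: "('f, 'r) lang \<Rightarrow> ('a, 'f, 'r) struc \<Rightarrow> bool" where
  "is_struc L M \<longleftrightarrow> dom M \<noteq> {} \<and>
     (\<forall>f xs. length xs = fst L f \<and> set xs \<subseteq> dom M \<longrightarrow> funs M f xs \<in> dom M)"

definition env :: "'a list \<Rightarrow> (nat \<Rightarrow> 'a) \<Rightarrow> nat \<Rightarrow> 'a" where
  "env xs e = (\<lambda>n. if n < length xs then xs ! n else e n)"

definition same_type :: "('f, 'r) lang \<Rightarrow> ('a, 'f, 'r) struc \<Rightarrow> 'a list \<Rightarrow> 'a list \<Rightarrow> bool" where
  "same_type L M xs ys \<longleftrightarrow> length xs = length ys \<and>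
     (\<forall>\<phi> e. wf_fm L \<phi> \<and> fv \<phi> \<subseteq> {..<length xs} \<and> range e \<subseteq> dom M \<longrightarrow>
        (sat M (env xs e) \<phi> \<longleftrightarrow> sat M (env ys e) \<phi>))"

definition same_type_over :: "('f, 'r) lang \<Rightarrow> ('a, 'f, 'r) struc \<Rightarrow> 'a set \<Rightarrow> 'a list \<Rightarrow> 'a list \<Rightarrow> bool" where
  "same_type_over L M P xs ys \<longleftrightarrow> length xs = length ys \<and>
     (\<forall>ps. set ps \<subseteq> P \<longrightarrow> same_type L M (xs @ ps) (ys @ ps))"

definition order_indisc_over :: "('f, 'r) lang \<Rightarrow> ('a, 'f, 'r) struc \<Rightarrow> 'a set \<Rightarrow> (rat \<Rightarrow> 'a list) \<Rightarrow> bool" where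
  "order_indisc_over L M P c \<longleftrightarrow>
     (\<forall>is js. sorted_wrt (<) is \<and> sorted_wrt (<) js \<and> length is = length js \<longrightarrow>
        same_type_over L M P (concat (map c is)) (concat (map c js)))"

definition params :: "(rat \<Rightarrow> 'a list) \<Rightarrow> 'a set" where
  "params c = (\<Union>i. set (c i))"

definition mutually_indisc :: "('f, 'r) lang \<Rightarrow> ('a, 'f, 'r) struc \<Rightarrow> (rat \<Rightarrow> 'a list) \<Rightarrow> (rat \<Rightarrow> 'a list) \<Rightarrow> bool" where
  "mutually_indisc L M a b \<longleftrightarrow> order_indisc_over L M (params b) a \<and> order_indisc_over L M (params a) b"

definition elem_emb :: "('f, 'r) lang \<Rightarrow> ('a, 'f, 'r) struc \<Rightarrow> ('b, 'f, 'r) struc \<Rightarrow> ('a \<Rightarrow> 'b) \<Rightarrow> bool" where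
  "elem_emb L M N h \<longleftrightarrow> is_struc L N \<and> h ` dom M \<subseteq> dom N \<and>
     (\<forall>\<phi> e. wf_fm L \<phi> \<and> range e \<subseteq> dom M \<longrightarrow> (sat M e \<phi> \<longleftrightarrow> sat N (h \<circ> e) \<phi>))"

text \<open>The formula phi(x;y;z) has variables x = 0..<nx, y = nx..<nx+ny, and parameters
  z = nx+ny..<nx+ny+length ps instantiated by ps.  The extension's carrier is taken in the type
  (nat => 'a) set, which is large enough to contain an ultrapower M^omega/U.\<close>
definition has_IP :: "('f, 'r) lang \<Rightarrow> ('a, 'f, 'r) struc \<Rightarrow> ('f, 'r) fm \<Rightarrow> nat \<Rightarrow> nat \<Rightarrow> 'a list \<Rightarrow> bool" where
  "has_IP L M \<phi> nx ny ps \<longleftrightarrow>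
     (\<exists>(N :: ((nat \<Rightarrow> 'a) set, 'f, 'r) struc) h. elem_emb L M N h \<and>
       (\<exists>(c :: nat \<Rightarrow> (nat \<Rightarrow> 'a) set list) (d :: nat set \<Rightarrow> (nat \<Rightarrow> 'a) set list).
          (\<forall>i. length (c i) = nx \<and> set (c i) \<subseteq> dom N) \<and>
          (\<forall>S. length (d S) = ny \<and> set (d S) \<subseteq> dom N) \<and>
          (\<forall>i S e. range e \<subseteq> dom N \<longrightarrow>
              (sat N (env (c i @ d S @ map h ps) e) \<phi> \<longleftrightarrow> i \<in> S))))"

text \<open>Index structure: U(G_*) = Inl ` Q, V(G_*) = Inr ` Q, the orders are those of Q,
  and R is an edge relation from U to V.  G_* is characterised (as the Fraisse limit
  of finite ordered bipartite graphs, via back-and-forth) by the extension property.\<close>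
definition gstar :: "(rat \<Rightarrow> rat \<Rightarrow> bool) \<Rightarrow> bool" where
  "gstar R \<longleftrightarrow>
     (\<forall>S T p q. finite S \<and> T \<subseteq> S \<and> p < q \<longrightarrow>
        (\<exists>u. p < u \<and> u < q \<and> (\<forall>v\<in>S. R u v \<longleftrightarrow> v \<in> T))) \<and>
     (\<forall>S T p q. finite S \<and> T \<subseteq> S \<and> p < q \<longrightarrow>
        (\<exists>v. p < v \<and> v < q \<and> (\<forall>u\<in>S. R u v \<longleftrightarrow> u \<in> T)))"

definition isU :: "rat + rat \<Rightarrow> bool" where "isU t \<longleftrightarrow> (\<exists>x. t = Inl x)"
definition isV :: "rat + rat \<Rightarrow> bool" where "isV t \<longleftrightarrow> (\<exists>x. t = Inr x)"
definition leU :: "rat + rat \<Rightarrow> rat + rat \<Rightarrow> bool" where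
  "leU t s \<longleftrightarrow> (\<exists>x y. t = Inl x \<and> s = Inl y \<and> x \<le> y)"
definition leV :: "rat + rat \<Rightarrow> rat + rat \<Rightarrow> bool" where
  "leV t s \<longleftrightarrow> (\<exists>x y. t = Inr x \<and> s = Inr y \<and> x \<le> y)"
definition relG :: "(rat \<Rightarrow> rat \<Rightarrow> bool) \<Rightarrow> rat + rat \<Rightarrow> rat + rat \<Rightarrow> bool" where
  "relG R t s \<longleftrightarrow> (\<exists>x y. t = Inl x \<and> s = Inr y \<and> R x y)"

text \<open>Equality of quantifier-free L*-types of tuples of indices (L* is relational, so
  this is agreement on all atomic formulas).\<close>
definition same_qftp :: "(rat \<Rightarrow> rat \<Rightarrow> bool) \<Rightarrow> (rat + rat) list \<Rightarrow> (rat + rat) list \<Rightarrow> bool" where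
  "same_qftp R ts ss \<longleftrightarrow> length ts = length ss \<and>
     (\<forall>k < length ts. (isU (ts!k) \<longleftrightarrow> isU (ss!k)) \<and> (isV (ts!k) \<longleftrightarrow> isV (ss!k))) \<and>
     (\<forall>k < length ts. \<forall>l < length ts.
        (ts!k = ts!l \<longleftrightarrow> ss!k = ss!l) \<and>
        (leU (ts!k) (ts!l) \<longleftrightarrow> leU (ss!k) (ss!l)) \<and>
        (leV (ts!k) (ts!l) \<longleftrightarrow> leV (ss!k) (ss!l)) \<and>
        (relG R (ts!k) (ts!l) \<longleftrightarrow> relG R (ss!k) (ss!l)))"

definition Lstar_indisc :: "('f, 'r) lang \<Rightarrow> ('a, 'f, 'r) struc \<Rightarrow> (rat \<Rightarrow> rat \<Rightarrow> bool) \<Rightarrow> (rat + rat \<Rightarrow> 'a list) \<Rightarrow> bool" where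
  "Lstar_indisc L M R c \<longleftrightarrow>
     (\<forall>ts ss. same_qftp R ts ss \<longrightarrow> same_type L M (concat (map c ts)) (concat (map c ss)))"

end

theory Submission
  imports Defs
begin


lemma finite_fv_trm: "finite (fv_trm t)"
  by (induction t) auto

lemma finite_fv: "finite (fv \<phi>)"
  by (induction \<phi>) (auto simp: finite_fv_trm)

lemma tval_coinc: "(\<forall>k\<in>fv_trm t. e k = e' k) \<Longrightarrow> tval M e t = tval M e' t"
proof (induction t)
  case (Var n) then show ?case by simp
next
  case (Fn f ts)
  then have eq: "map (tval M e) ts = map (tval M e') ts" by (intro map_cong) auto
  show ?case by (simp only: tval.simps eq)
qed

lemma sat_coinc: "(\<forall>k\<in>fv \<phi>. e k = e' k) \<Longrightarrow> sat M e \<phi> = sat M e' \<phi>"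
proof (induction \<phi> arbitrary: e e')
  case (Eq s t) then show ?case using tval_coinc[of s e e' M] tval_coinc[of t e e' M] by simp
next
  case (Rel r ts)
  then have eq: "map (tval M e) ts = map (tval M e') ts" using tval_coinc by (intro map_cong) fastforce+
  show ?case by (simp only: sat.simps eq)
next
  case (Conj \<phi>1 \<phi>2)
  have "sat M e \<phi>1 = sat M e' \<phi>1" using Conj.prems by (intro Conj.IH(1)) auto
  moreover have "sat M e \<phi>2 = sat M e' \<phi>2" using Conj.prems by (intro Conj.IH(2)) auto
  ultimately show ?case by simp
next
  case (Ex n \<phi>)
  have "\<And>x. sat M (e(n := x)) \<phi> = sat M (e'(n := x)) \<phi>"
    using Ex.prems by (intro Ex.IH) auto
  then show ?case by simp
qed auto

lemma tval_dom:
  assumes "is_struc L M" "wf_trm (fst L) t" "\<forall>k\<in>fv_trm t. e k \<in> dom M"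
  shows "tval M e t \<in> dom M"
  using assms(2,3)
proof (induction t)
  case (Fn f ts)
  have "set (map (tval M e) ts) \<subseteq> dom M" using Fn by auto
  moreover have "length (map (tval M e) ts) = fst L f" using Fn.prems by simp
  ultimately show ?case using assms(1) unfolding is_struc_def by simp
qed simp

lemma env_irrel:
  assumes "fv \<phi> \<subseteq> {..<length X}"
  shows "sat M (env X e) \<phi> = sat M (env X e') \<phi>"
  by (rule sat_coinc) (use assms in \<open>auto simp: env_def\<close>)

section \<open>Renaming\<close>

fun tren :: "(nat \<Rightarrow> nat) \<Rightarrow> 'f trm \<Rightarrow> 'f trm" where
  "tren s (Var n) = Var (s n)"
| "tren s (Fn f ts) = Fn f (map (tren s) ts)"

fun ren :: "(nat \<Rightarrow> nat) \<Rightarrow> ('f, 'r) fm \<Rightarrow> ('f, 'r) fm" where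
  "ren s Bot = Bot"
| "ren s (Eq t1 t2) = Eq (tren s t1) (tren s t2)"
| "ren s (Rel r ts) = Rel r (map (tren s) ts)"
| "ren s (Neg \<phi>) = Neg (ren s \<phi>)"
| "ren s (Conj \<phi> \<psi>) = Conj (ren s \<phi>) (ren s \<psi>)"
| "ren s (Ex n \<phi>) = Ex (Suc (Max (insert 0 (s ` (fv \<phi> - {n})))))
      (ren (s(n := Suc (Max (insert 0 (s ` (fv \<phi> - {n})))))) \<phi>)"

lemma tval_tren: "tval M e (tren s t) = tval M (e \<circ> s) t"
proof (induction t)
  case (Fn f ts)
  have eq: "map (tval M e \<circ> tren s) ts = map (tval M (e \<circ> s)) ts"
    using Fn by (intro map_cong) (auto simp: o_def)
  show ?case by (simp only: tren.simps tval.simps map_map eq)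
qed simp

lemma wf_tren: "wf_trm fa (tren s t) = wf_trm fa t"
  by (induction t) auto

lemma fv_tren: "fv_trm (tren s t) = s ` fv_trm t"
  by (induction t) auto

lemma wf_ren: "wf_fm L (ren s \<phi>) = wf_fm L \<phi>"
  by (induction \<phi> arbitrary: s) (auto simp: wf_tren)

lemma fv_ren: "fv (ren s \<phi>) \<subseteq> s ` fv \<phi>"
proof (induction \<phi> arbitrary: s)
  case (Ex n \<phi>)
  define m where "m = Suc (Max (insert 0 (s ` (fv \<phi> - {n}))))"
  have "fv (ren (s(n := m)) \<phi>) \<subseteq> (s(n:=m)) ` fv \<phi>" by (rule Ex.IH)
  then have "fv (ren (s(n := m)) \<phi>) - {m} \<subseteq> s ` (fv \<phi> - {n})" by auto
  then show ?case by (simp add: m_def[symmetric] Let_def)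
next
  case (Conj \<phi>1 \<phi>2)
  have "fv (ren s \<phi>1) \<subseteq> s ` fv \<phi>1" "fv (ren s \<phi>2) \<subseteq> s ` fv \<phi>2" by (rule Conj.IH)+
  then show ?case by auto
qed (auto simp: fv_tren)

lemma sat_ren: "sat M e (ren s \<phi>) = sat M (e \<circ> s) \<phi>"
proof (induction \<phi> arbitrary: s e)
  case (Eq t1 t2) then show ?case by (simp add: tval_tren o_def)
next
  case (Rel r ts) then show ?case by (simp add: tval_tren o_def)
next
  case (Ex n \<phi>)
  define m where "m = Suc (Max (insert 0 (s ` (fv \<phi> - {n}))))"
  have fin: "finite (insert 0 (s ` (fv \<phi> - {n})))" by (simp add: finite_fv)
  have fresh: "s k \<noteq> m" if "k \<in> fv \<phi>" "k \<noteq> n" for k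
  proof -
    have "s k \<le> Max (insert 0 (s ` (fv \<phi> - {n})))" using that fin by (intro Max_ge) auto
    then show ?thesis unfolding m_def by simp
  qed
  have eq: "sat M (e(m := x) \<circ> (s(n := m))) \<phi> = sat M ((e \<circ> s)(n := x)) \<phi>" for x
    by (rule sat_coinc) (auto simp: fresh)
  have "sat M e (ren s (Ex n \<phi>)) = (\<exists>x\<in>dom M. sat M (e(m:=x)) (ren (s(n:=m)) \<phi>))"
    by (simp only: ren.simps sat.simps m_def)
  also have "\<dots> = (\<exists>x\<in>dom M. sat M (e(m := x) \<circ> (s(n := m))) \<phi>)" by (simp only: Ex.IH)
  also have "\<dots> = (\<exists>x\<in>dom M. sat M ((e \<circ> s)(n:=x)) \<phi>)" by (simp only: eq)
  finally show ?case by (simp only: sat.simps)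
qed auto

lemma ren_nth:
  assumes "\<forall>i\<in>set idx. i < length Y" "map (nth Y) idx = X" "fv \<psi> \<subseteq> {..<length X}"
  shows "fv (ren (nth idx) \<psi>) \<subseteq> {..<length Y}"
    and "sat M (env Y e) (ren (nth idx) \<psi>) = sat M (env X e) \<psi>"
proof -
  have len: "length idx = length X" using assms(2) by auto
  show "fv (ren (nth idx) \<psi>) \<subseteq> {..<length Y}"
  proof
    fix x assume "x \<in> fv (ren (nth idx) \<psi>)"
    then obtain k where k: "k \<in> fv \<psi>" "x = idx ! k" using fv_ren[of "nth idx" \<psi>] by blast
    then have "k < length idx" using assms(3) len by auto
    then have "idx ! k \<in> set idx" by (rule nth_mem)
    then show "x \<in> {..<length Y}" using assms(1) k by auto
  qed
  have "sat M (env Y e \<circ> nth idx) \<psi> = sat M (env X e) \<psi>"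
  proof (rule sat_coinc, intro ballI)
    fix k assume k: "k \<in> fv \<psi>"
    then have kl: "k < length X" using assms(3) by auto
    then have "idx ! k < length Y" using assms(1) len nth_mem by auto
    then have "(env Y e \<circ> nth idx) k = Y ! (idx ! k)" by (simp add: env_def)
    also have "\<dots> = X ! k" using assms(2) kl len by (metis nth_map)
    finally show "(env Y e \<circ> nth idx) k = env X e k" using kl by (simp add: env_def)
  qed
  then show "sat M (env Y e) (ren (nth idx) \<psi>) = sat M (env X e) \<psi>" by (simp add: sat_ren)
qed




section \<open>Existence of a nonprincipal ultrafilter on nat\<close>

lemma ex_ultra:
  "\<exists>U::nat filter. U \<noteq> bot \<and> U \<le> sequentially \<and> (\<forall>P. eventually P U \<or> eventually (\<lambda>x. \<not> P x) U)"
proof -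
  define R :: "(nat filter \<times> nat filter) set" where
    "R = {(G, H). H \<noteq> bot \<and> H \<le> G \<and> G \<le> sequentially}"
  have fieldR: "Field R = {G. G \<noteq> bot \<and> G \<le> sequentially}"
  proof
    show "Field R \<subseteq> {G. G \<noteq> bot \<and> G \<le> sequentially}"
    proof
      fix G assume "G \<in> Field R"
      then consider H where "(G, H) \<in> R" | H where "(H, G) \<in> R" unfolding Field_def by blast
      then show "G \<in> {G. G \<noteq> bot \<and> G \<le> sequentially}"
      proof cases
        case 1 then show ?thesis unfolding R_def using bot_unique by fastforce
      next
        case 2 then show ?thesis unfolding R_def using order_trans by fastforce
      qed
    qed
    show "{G. G \<noteq> bot \<and> G \<le> sequentially} \<subseteq> Field R"
    proof
      fix G assume "G \<in> {G. G \<noteq> bot \<and> G \<le> sequentially}"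
      then have "(G, G) \<in> R" unfolding R_def by auto
      then show "G \<in> Field R" unfolding Field_def by blast
    qed
  qed
  have po: "Partial_order R"
  proof -
    have sub: "R \<subseteq> Field R \<times> Field R" unfolding Field_def by auto
    moreover have "\<forall>x\<in>Field R. (x, x) \<in> R" using fieldR unfolding R_def by auto
    ultimately have "refl_on (Field R) R" unfolding refl_on_def by blast
    moreover have "trans R" unfolding trans_def R_def using order_trans by fastforce
    moreover have "antisym R" unfolding antisym_def R_def by auto
    ultimately show ?thesis using sub unfolding partial_order_on_def preorder_on_def by blast
  qed
  have ub: "\<exists>u\<in>Field R. \<forall>a\<in>C. (a, u) \<in> R" if C: "C \<in> Chains R" for C
  proof (cases "C = {}")
    case True
    have "sequentially \<in> Field R" unfolding fieldR by simp
    then show ?thesis using True by blast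
  next
    case False
    have chain: "(a, b) \<in> R \<or> (b, a) \<in> R" if "a \<in> C" "b \<in> C" for a b
      using C that unfolding Chains_def by blast
    have inC: "a \<noteq> bot \<and> a \<le> sequentially" if "a \<in> C" for a
    proof -
      have "(a, a) \<in> R" using chain[OF that that] by simp
      then have "a \<in> Field R" unfolding Field_def by blast
      then show ?thesis unfolding fieldR by simp
    qed
    have base: "\<exists>x\<in>C. x \<le> inf a b" if "a \<in> C" "b \<in> C" for a b
    proof -
      have "a \<le> b \<or> b \<le> a" using chain[OF that] unfolding R_def by auto
      then show ?thesis
      proof
        assume "a \<le> b" then have "a \<le> inf a b" by simp
        then show ?thesis using that by blast
      next
        assume "b \<le> a" then have "b \<le> inf a b" by simp
        then show ?thesis using that by blast
      qed
    qed
    have evI: "eventually (\<lambda>x. False) (Inf C) \<longleftrightarrow> (\<exists>b\<in>C. eventually (\<lambda>x. False) b)"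
      by (rule eventually_Inf_base[OF False base])
    have nb: "Inf C \<noteq> bot"
    proof
      assume "Inf C = bot"
      then have "eventually (\<lambda>x. False) (Inf C)" by simp
      then obtain b where "b \<in> C" "eventually (\<lambda>x. False) b" using evI by blast
      then show False using inC by (simp add: trivial_limit_def)
    qed
    obtain c where c: "c \<in> C" using False by blast
    have "Inf C \<le> c" using c by (rule Inf_lower)
    then have le: "Inf C \<le> sequentially" using inC[OF c] by (blast intro: order_trans)
    have "Inf C \<in> Field R" unfolding fieldR using nb le by simp
    moreover have "(a, Inf C) \<in> R" if "a \<in> C" for a
      using nb inC[OF that] Inf_lower[OF that] unfolding R_def by simp
    ultimately show ?thesis by blast
  qed
  from Zorns_po_lemma[OF po ub] obtain m where m: "m \<in> Field R"
    and max: "\<forall>a\<in>Field R. (m, a) \<in> R \<longrightarrow> a = m" by (rule bexE)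
  have mb: "m \<noteq> bot" "m \<le> sequentially" using m unfolding fieldR by simp_all
  have "eventually P m \<or> eventually (\<lambda>x. \<not> P x) m" for P
  proof (rule disjCI)
    assume a: "\<not> eventually (\<lambda>x. \<not> P x) m"
    define G where "G = inf m (principal {x. P x})"
    have evG: "eventually Q G \<longleftrightarrow> eventually (\<lambda>x. P x \<longrightarrow> Q x) m" for Q
      unfolding G_def by (simp add: eventually_inf_principal)
    have "G \<noteq> bot"
    proof
      assume "G = bot"
      then have "eventually (\<lambda>x. False) G" by simp
      then have "eventually (\<lambda>x. \<not> P x) m" unfolding evG by simp
      then show False using a by contradiction
    qed
    moreover have "G \<le> m" unfolding G_def by (rule inf_le1)
    ultimately have GR: "(m, G) \<in> R" using mb unfolding R_def by blast
    then have "G \<in> Field R" unfolding Field_def by blast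
    then have "G = m" using max GR by simp
    moreover have "eventually P G" unfolding evG by simp
    ultimately show "eventually P m" by simp
  qed
  then show ?thesis using mb by blast
qed

section \<open>Ultrapowers\<close>

definition PiM :: "('a, 'f, 'r) struc \<Rightarrow> (nat \<Rightarrow> 'a) set" where
  "PiM M = {f. \<forall>n. f n \<in> dom M}"

definition ucls :: "nat filter \<Rightarrow> ('a, 'f, 'r) struc \<Rightarrow> (nat \<Rightarrow> 'a) \<Rightarrow> (nat \<Rightarrow> 'a) set" where
  "ucls U M f = {g \<in> PiM M. eventually (\<lambda>n. f n = g n) U}"

definition urep :: "(nat \<Rightarrow> 'a) set \<Rightarrow> nat \<Rightarrow> 'a" where
  "urep x = (SOME g. g \<in> x)"

definition upow :: "nat filter \<Rightarrow> ('a, 'f, 'r) struc \<Rightarrow> ((nat \<Rightarrow> 'a) set, 'f, 'r) struc" where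
  "upow U M = \<lparr>dom = ucls U M ` PiM M,
      funs = (\<lambda>f xs. ucls U M (\<lambda>n. funs M f (map (\<lambda>x. urep x n) xs))),
      rels = (\<lambda>r xs. eventually (\<lambda>n. rels M r (map (\<lambda>x. urep x n) xs)) U)\<rparr>"

lemma upow_simps:
  "dom (upow U M) = ucls U M ` PiM M"
  "funs (upow U M) f xs = ucls U M (\<lambda>n. funs M f (map (\<lambda>x. urep x n) xs))"
  "rels (upow U M) r xs = eventually (\<lambda>n. rels M r (map (\<lambda>x. urep x n) xs)) U"
  by (simp_all add: upow_def)

lemma ucls_self: "f \<in> PiM M \<Longrightarrow> f \<in> ucls U M f"
  by (simp add: ucls_def)

lemma ucls_cong: "eventually (\<lambda>n. f n = g n) U \<Longrightarrow> ucls U M f = ucls U M g"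
  unfolding ucls_def by (auto elim: eventually_elim2)

lemma ucls_eq_iff: "f \<in> PiM M \<Longrightarrow> g \<in> PiM M \<Longrightarrow> ucls U M f = ucls U M g \<longleftrightarrow> eventually (\<lambda>n. f n = g n) U"
proof
  assume "f \<in> PiM M" "g \<in> PiM M" "ucls U M f = ucls U M g"
  then have "g \<in> ucls U M f" using ucls_self by metis
  then show "eventually (\<lambda>n. f n = g n) U" by (simp add: ucls_def)
qed (rule ucls_cong)

lemma urep_props:
  assumes "x \<in> dom (upow U M)"
  shows "urep x \<in> x" "urep x \<in> PiM M" "ucls U M (urep x) = x"
proof -
  obtain f where f: "f \<in> PiM M" "x = ucls U M f" using assms by (auto simp: upow_simps)
  then have "f \<in> x" using ucls_self by metis
  then show ux: "urep x \<in> x" unfolding urep_def by (rule someI[where P="\<lambda>g. g \<in> x"])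
  then show "urep x \<in> PiM M" using f by (simp add: ucls_def)
  from ux have "eventually (\<lambda>n. f n = urep x n) U" using f by (simp add: ucls_def)
  then show "ucls U M (urep x) = x" using f ucls_cong by metis
qed

lemma urep_dom: "x \<in> dom (upow U M) \<Longrightarrow> urep x n \<in> dom M"
  using urep_props(2) by (fastforce simp: PiM_def)

lemma urep_ucls: "f \<in> PiM M \<Longrightarrow> eventually (\<lambda>n. urep (ucls U M f) n = f n) U"
proof -
  assume f: "f \<in> PiM M"
  then have "ucls U M f \<in> dom (upow U M)" by (simp add: upow_simps)
  then have "urep (ucls U M f) \<in> ucls U M f" by (rule urep_props)
  then show ?thesis by (simp add: ucls_def eq_commute)
qed

lemma upow_tval:
  assumes M: "is_struc L M" and e: "range e \<subseteq> dom (upow U M)" and t: "wf_trm (fst L) t"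
  shows "tval (upow U M) e t = ucls U M (\<lambda>n. tval M (\<lambda>k. urep (e k) n) t)"
  using t
proof (induction t)
  case (Var k)
  have "e k \<in> dom (upow U M)" using e by auto
  then have "ucls U M (urep (e k)) = e k" by (rule urep_props(3))
  then show ?case by simp
next
  case (Fn f ts)
  define \<tau> where "\<tau> t = (\<lambda>n. tval M (\<lambda>k. urep (e k) n) t)" for t
  have wfs: "wf_trm (fst L) t" if "t \<in> set ts" for t using Fn.prems that by simp
  have IH: "tval (upow U M) e t = ucls U M (\<tau> t)" if "t \<in> set ts" for t
    unfolding \<tau>_def using Fn.IH[OF that wfs[OF that]] .
  have ed: "urep (e k) n \<in> dom M" for k n
    using e by (intro urep_dom) blast
  have Pi: "\<tau> t \<in> PiM M" if "t \<in> set ts" for t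
    unfolding PiM_def \<tau>_def
  proof (intro CollectI allI)
    fix n show "tval M (\<lambda>k. urep (e k) n) t \<in> dom M"
      by (rule tval_dom[OF M wfs[OF that]]) (simp add: ed)
  qed
  have ev0: "eventually (\<lambda>n. \<forall>t\<in>set ts. urep (ucls U M (\<tau> t)) n = \<tau> t n) U"
    using Pi urep_ucls by (intro eventually_ball_finite) auto
  have ev: "eventually (\<lambda>n. map (\<lambda>x. urep x n) (map (tval (upow U M) e) ts)
        = map (tval M (\<lambda>k. urep (e k) n)) ts) U"
    using ev0
  proof (rule eventually_mono)
    fix n assume h: "\<forall>t\<in>set ts. urep (ucls U M (\<tau> t)) n = \<tau> t n"
    show "map (\<lambda>x. urep x n) (map (tval (upow U M) e) ts) = map (tval M (\<lambda>k. urep (e k) n)) ts"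
      unfolding map_map
    proof (rule map_cong[OF refl])
      fix t assume t: "t \<in> set ts"
      have "((\<lambda>x. urep x n) \<circ> tval (upow U M) e) t = urep (ucls U M (\<tau> t)) n" using IH[OF t] by simp
      also have "\<dots> = \<tau> t n" using h t by blast
      finally show "((\<lambda>x. urep x n) \<circ> tval (upow U M) e) t = tval M (\<lambda>k. urep (e k) n) t"
        unfolding \<tau>_def .
    qed
  qed
  have "tval (upow U M) e (Fn f ts) = ucls U M (\<lambda>n. funs M f (map (\<lambda>x. urep x n) (map (tval (upow U M) e) ts)))"
    by (simp add: upow_simps)
  also have "\<dots> = ucls U M (\<lambda>n. funs M f (map (tval M (\<lambda>k. urep (e k) n)) ts))"
    by (rule ucls_cong) (rule eventually_mono[OF ev], simp only:)
  finally show ?case by simp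
qed

lemma tval_Pi:
  assumes M: "is_struc L M" and e: "range e \<subseteq> dom (upow U M)" and t: "wf_trm (fst L) t"
  shows "(\<lambda>n. tval M (\<lambda>k. urep (e k) n) t) \<in> PiM M"
  unfolding PiM_def
proof (intro CollectI allI)
  have ed: "urep (e k) n \<in> dom M" for k n
    using e by (intro urep_dom) blast
  fix n show "tval M (\<lambda>k. urep (e k) n) t \<in> dom M"
    by (rule tval_dom[OF M t]) (simp add: ed)
qed

lemma urep_tval_ev:
  assumes M: "is_struc L M" and e: "range e \<subseteq> dom (upow U M)" and t: "wf_trm (fst L) t"
  shows "eventually (\<lambda>n. urep (tval (upow U M) e t) n = tval M (\<lambda>k. urep (e k) n) t) U"
  unfolding upow_tval[OF M e t] by (rule urep_ucls[OF tval_Pi[OF M e t]])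

lemma urep_map_ev:
  assumes M: "is_struc L M" and e: "range e \<subseteq> dom (upow U M)" and ts: "\<forall>t\<in>set ts. wf_trm (fst L) t"
  shows "eventually (\<lambda>n. map (\<lambda>x. urep x n) (map (tval (upow U M) e) ts) = map (tval M (\<lambda>k. urep (e k) n)) ts) U"
proof -
  have "eventually (\<lambda>n. \<forall>t\<in>set ts. urep (tval (upow U M) e t) n = tval M (\<lambda>k. urep (e k) n) t) U"
    using urep_tval_ev[OF M e] ts by (intro eventually_ball_finite) auto
  then show ?thesis
  proof (rule eventually_mono)
    fix n assume "\<forall>t\<in>set ts. urep (tval (upow U M) e t) n = tval M (\<lambda>k. urep (e k) n) t"
    then show "map (\<lambda>x. urep x n) (map (tval (upow U M) e) ts) = map (tval M (\<lambda>k. urep (e k) n)) ts"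
      unfolding map_map by (intro map_cong) auto
  qed
qed

lemma ult_neg:
  assumes "U \<noteq> bot" "\<forall>P. eventually P U \<or> eventually (\<lambda>x. \<not> P x) U"
  shows "eventually (\<lambda>x. \<not> P x) U \<longleftrightarrow> \<not> eventually P U"
proof
  assume a: "eventually (\<lambda>x. \<not> P x) U"
  show "\<not> eventually P U"
  proof
    assume "eventually P U"
    then have "eventually (\<lambda>x. False) U" using a by (rule eventually_elim2) simp
    then show False using assms(1) by (simp add: trivial_limit_def)
  qed
next
  assume "\<not> eventually P U" then show "eventually (\<lambda>x. \<not> P x) U" using assms(2) by blast
qed

lemma los:
  assumes M: "is_struc L M" and U: "U \<noteq> bot" "\<forall>P. eventually P U \<or> eventually (\<lambda>x. \<not> P x) U"
    and e: "range e \<subseteq> dom (upow U M)" and \<phi>: "wf_fm L \<phi>"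
  shows "sat (upow U M) e \<phi> \<longleftrightarrow> eventually (\<lambda>n. sat M (\<lambda>k. urep (e k) n) \<phi>) U"
  using e \<phi>
proof (induction \<phi> arbitrary: e)
  case Bot
  then show ?case using U(1) by (simp add: trivial_limit_def)
next
  case (Eq s t)
  then have ws: "wf_trm (fst L) s" "wf_trm (fst L) t" by simp_all
  show ?case
    unfolding sat.simps upow_tval[OF M Eq.prems(1) ws(1)] upow_tval[OF M Eq.prems(1) ws(2)]
    by (rule ucls_eq_iff[OF tval_Pi[OF M Eq.prems(1) ws(1)] tval_Pi[OF M Eq.prems(1) ws(2)]])
next
  case (Rel r ts)
  then have ws: "\<forall>t\<in>set ts. wf_trm (fst L) t" by simp
  have ev: "eventually (\<lambda>n. rels M r (map (\<lambda>x. urep x n) (map (tval (upow U M) e) ts))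
      = rels M r (map (tval M (\<lambda>k. urep (e k) n)) ts)) U"
    by (rule eventually_mono[OF urep_map_ev[OF M Rel.prems(1) ws]]) (simp only:)
  have "sat (upow U M) e (Rel r ts) = eventually (\<lambda>n. rels M r (map (\<lambda>x. urep x n) (map (tval (upow U M) e) ts))) U"
    by (simp add: upow_simps)
  also have "\<dots> = eventually (\<lambda>n. rels M r (map (tval M (\<lambda>k. urep (e k) n)) ts)) U"
    by (rule eventually_subst[OF ev])
  finally show ?case by simp
next
  case (Neg \<phi>)
  then have "sat (upow U M) e \<phi> \<longleftrightarrow> eventually (\<lambda>n. sat M (\<lambda>k. urep (e k) n) \<phi>) U" by simp
  then show ?case using ult_neg[OF U] by simp
next
  case (Conj \<phi> \<psi>)
  then have "sat (upow U M) e \<phi> \<longleftrightarrow> eventually (\<lambda>n. sat M (\<lambda>k. urep (e k) n) \<phi>) U"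
    "sat (upow U M) e \<psi> \<longleftrightarrow> eventually (\<lambda>n. sat M (\<lambda>k. urep (e k) n) \<psi>) U" by simp_all
  then show ?case by (simp add: eventually_conj_iff)
next
  case (Ex v \<phi>)
  have wf: "wf_fm L \<phi>" using Ex.prems by simp
  have IH: "sat (upow U M) (e(v := x)) \<phi> \<longleftrightarrow> eventually (\<lambda>n. sat M ((\<lambda>k. urep (e k) n)(v := urep x n)) \<phi>) U"
    if x: "x \<in> dom (upow U M)" for x
  proof -
    have r: "range (e(v := x)) \<subseteq> dom (upow U M)" using Ex.prems(1) x by auto
    have fe: "(\<lambda>k. urep ((e(v := x)) k) n) = (\<lambda>k. urep (e k) n)(v := urep x n)" for n by auto
    show ?thesis using Ex.IH[OF r wf] unfolding fe .
  qed
  show ?case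
  proof
    assume "sat (upow U M) e (Ex v \<phi>)"
    then obtain x where x: "x \<in> dom (upow U M)" "sat (upow U M) (e(v := x)) \<phi>" by auto
    then have ev: "eventually (\<lambda>n. sat M ((\<lambda>k. urep (e k) n)(v := urep x n)) \<phi>) U" using IH by blast
    show "eventually (\<lambda>n. sat M (\<lambda>k. urep (e k) n) (Ex v \<phi>)) U"
    proof (rule eventually_mono[OF ev])
      fix n assume "sat M ((\<lambda>k. urep (e k) n)(v := urep x n)) \<phi>"
      moreover have "urep x n \<in> dom M" using x(1) by (rule urep_dom)
      ultimately show "sat M (\<lambda>k. urep (e k) n) (Ex v \<phi>)" by auto
    qed
  next
    assume a: "eventually (\<lambda>n. sat M (\<lambda>k. urep (e k) n) (Ex v \<phi>)) U"
    obtain y0 where y0: "y0 \<in> dom M" using M unfolding is_struc_def by auto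
    define g where "g n = (if \<exists>y\<in>dom M. sat M ((\<lambda>k. urep (e k) n)(v := y)) \<phi>
        then SOME y. y \<in> dom M \<and> sat M ((\<lambda>k. urep (e k) n)(v := y)) \<phi> else y0)" for n
    have gs: "g n \<in> dom M \<and> (sat M (\<lambda>k. urep (e k) n) (Ex v \<phi>) \<longrightarrow> sat M ((\<lambda>k. urep (e k) n)(v := g n)) \<phi>)" for n
    proof (cases "\<exists>y\<in>dom M. sat M ((\<lambda>k. urep (e k) n)(v := y)) \<phi>")
      case True
      then have "\<exists>y. y \<in> dom M \<and> sat M ((\<lambda>k. urep (e k) n)(v := y)) \<phi>" by blast
      then have "g n \<in> dom M \<and> sat M ((\<lambda>k. urep (e k) n)(v := g n)) \<phi>"
        unfolding g_def using True by (simp only: if_True) (rule someI_ex)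
      then show ?thesis by blast
    next
      case False
      then show ?thesis unfolding g_def using y0 by simp
    qed
    have gP: "g \<in> PiM M" unfolding PiM_def using gs by blast
    define x where "x = ucls U M g"
    have xd: "x \<in> dom (upow U M)" using gP by (simp add: upow_simps x_def)
    have "eventually (\<lambda>n. urep x n = g n) U" unfolding x_def by (rule urep_ucls[OF gP])
    then have "eventually (\<lambda>n. sat M ((\<lambda>k. urep (e k) n)(v := urep x n)) \<phi>) U"
      using a
    proof (rule eventually_elim2)
      fix n assume "urep x n = g n" "sat M (\<lambda>k. urep (e k) n) (Ex v \<phi>)"
      then show "sat M ((\<lambda>k. urep (e k) n)(v := urep x n)) \<phi>" using gs[of n] by simp
    qed
    then show "sat (upow U M) e (Ex v \<phi>)" using IH[OF xd] xd by auto
  qed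
qed




lemma upow_struc:
  assumes M: "is_struc L M"
  shows "is_struc L (upow U M)"
  unfolding is_struc_def
proof (intro conjI allI impI)
  obtain y0 where y0: "y0 \<in> dom M" using M unfolding is_struc_def by auto
  then have "(\<lambda>_. y0) \<in> PiM M" unfolding PiM_def by simp
  then show "dom (upow U M) \<noteq> {}" unfolding upow_simps by blast
next
  fix f xs assume a: "length xs = fst L f \<and> set xs \<subseteq> dom (upow U M)"
  have "(\<lambda>n. funs M f (map (\<lambda>x. urep x n) xs)) \<in> PiM M"
    unfolding PiM_def
  proof (intro CollectI allI)
    fix n
    have "set (map (\<lambda>x. urep x n) xs) \<subseteq> dom M" using a urep_dom by fastforce
    moreover have "length (map (\<lambda>x. urep x n) xs) = fst L f" using a by simp
    ultimately show "funs M f (map (\<lambda>x. urep x n) xs) \<in> dom M" using M unfolding is_struc_def by blast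
  qed
  then show "funs (upow U M) f xs \<in> dom (upow U M)" unfolding upow_simps by blast
qed

lemma upow_elem:
  fixes M :: "('a, 'f, 'r) struc"
  assumes M: "is_struc L M" and U: "U \<noteq> bot" "\<forall>P. eventually P U \<or> eventually (\<lambda>x. \<not> P x) U"
  shows "elem_emb L M (upow U M) (\<lambda>a. ucls U M (\<lambda>_. a))"
  unfolding elem_emb_def
proof (intro conjI allI impI)
  show "is_struc L (upow U M)" by (rule upow_struc[OF M])
  have Pc: "(\<lambda>_. a) \<in> PiM M" if "a \<in> dom M" for a using that unfolding PiM_def by simp
  show "(\<lambda>a. ucls U M (\<lambda>_. a)) ` dom M \<subseteq> dom (upow U M)"
    unfolding upow_simps using Pc by blast
  fix \<phi> :: "('f, 'r) fm" and e :: "nat \<Rightarrow> 'a" assume a: "wf_fm L \<phi> \<and> range e \<subseteq> dom M"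
  let ?h = "\<lambda>a. ucls U M (\<lambda>_. a)"
  have r: "range (?h \<circ> e) \<subseteq> dom (upow U M)" unfolding upow_simps using Pc a by auto
  have "sat (upow U M) (?h \<circ> e) \<phi> \<longleftrightarrow> eventually (\<lambda>n. sat M (\<lambda>k. urep ((?h \<circ> e) k) n) \<phi>) U"
    using los[OF M U r] a by blast
  also have "\<dots> \<longleftrightarrow> eventually (\<lambda>n. sat M e \<phi>) U"
  proof (rule eventually_subst)
    have "eventually (\<lambda>n. \<forall>k\<in>fv \<phi>. urep ((?h \<circ> e) k) n = e k) U"
    proof (rule eventually_ball_finite[OF finite_fv], rule ballI)
      fix k
      have "e k \<in> dom M" using a by auto
      then show "eventually (\<lambda>n. urep ((?h \<circ> e) k) n = e k) U"
        unfolding o_def by (rule urep_ucls[OF Pc])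
    qed
    then show "eventually (\<lambda>n. sat M (\<lambda>k. urep ((?h \<circ> e) k) n) \<phi> = sat M e \<phi>) U"
      by (rule eventually_mono) (rule sat_coinc, simp)
  qed
  also have "\<dots> \<longleftrightarrow> sat M e \<phi>" using U(1) by simp
  finally show "sat M e \<phi> \<longleftrightarrow> sat (upow U M) (?h \<circ> e) \<phi>" by simp
qed


lemma gstarU:
  assumes "gstar R" "finite S" "T \<subseteq> S" "p < q"
  shows "\<exists>u. p < u \<and> u < q \<and> (\<forall>v\<in>S. R u v \<longleftrightarrow> v \<in> T)"
proof -
  have h: "\<forall>S T p q. finite S \<and> T \<subseteq> S \<and> p < q \<longrightarrow>
        (\<exists>u. p < u \<and> u < q \<and> (\<forall>v\<in>S. R u v \<longleftrightarrow> v \<in> T))"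
    using assms(1) unfolding gstar_def by (rule conjunct1)
  show ?thesis using spec[OF spec[OF spec[OF spec[OF h, of S], of T], of p], of q] assms(2-4) by blast
qed

lemma gstarV:
  assumes "gstar R" "finite S" "T \<subseteq> S" "p < q"
  shows "\<exists>v. p < v \<and> v < q \<and> (\<forall>u\<in>S. R u v \<longleftrightarrow> u \<in> T)"
proof -
  have h: "\<forall>S T p q. finite S \<and> T \<subseteq> S \<and> p < q \<longrightarrow>
        (\<exists>v. p < v \<and> v < q \<and> (\<forall>u\<in>S. R u v \<longleftrightarrow> u \<in> T))"
    using assms(1) unfolding gstar_def by (rule conjunct2)
  show ?thesis using spec[OF spec[OF spec[OF spec[OF h, of S], of T], of p], of q] assms(2-4) by blast
qed

lemma IP_lemma:
  fixes M :: "('a, 'f, 'r) struc" and \<psi> :: "('f, 'r) fm"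
  assumes M: "is_struc L M" and G: "gstar R"
    and la: "\<And>i. length (a i) = na \<and> set (a i) \<subseteq> dom M"
    and lb: "\<And>j. length (b j) = nb \<and> set (b j) \<subseteq> dom M"
    and ps: "set ps \<subseteq> dom M" and fv\<psi>: "fv \<psi> \<subseteq> {..<na + nb + length ps}" and wf: "wf_fm L \<psi>"
    and I: "lo1 < hi1" "finite F1" "T1 \<subseteq> F1" "lo2 < hi2" "finite F2" "T2 \<subseteq> F2"
      "F2 \<inter> {lo1<..<hi1} = {}"
    and H: "\<And>u v e. lo1 < u \<Longrightarrow> u < hi1 \<Longrightarrow> (\<forall>y\<in>F1. R u y \<longleftrightarrow> y \<in> T1) \<Longrightarrow>
       lo2 < v \<Longrightarrow> v < hi2 \<Longrightarrow> (\<forall>x\<in>F2. R x v \<longleftrightarrow> x \<in> T2) \<Longrightarrow> range e \<subseteq> dom M \<Longrightarrow>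
       sat M (env (a u @ b v @ ps) e) \<psi> \<longleftrightarrow> R u v"
  shows "has_IP L M \<psi> na nb ps"
proof -
  define pu where "pu u \<longleftrightarrow> lo1 < u \<and> u < hi1 \<and> (\<forall>y\<in>F1. R u y \<longleftrightarrow> y \<in> T1)" for u
  have exu: "\<exists>u. p < u \<and> u < q \<and> (\<forall>y\<in>F1. R u y \<longleftrightarrow> y \<in> T1)" if "p < q" for p q
    using gstarU[OF G I(2,3) that] .
  obtain u0 where u0: "pu u0" using exu[OF I(1)] unfolding pu_def by blast
  define useq where "useq = rec_nat u0 (\<lambda>_ p. SOME u. p < u \<and> u < hi1 \<and> (\<forall>y\<in>F1. R u y \<longleftrightarrow> y \<in> T1))"
  have us0: "useq 0 = u0" unfolding useq_def by simp
  have usS: "useq (Suc l) = (SOME u. useq l < u \<and> u < hi1 \<and> (\<forall>y\<in>F1. R u y \<longleftrightarrow> y \<in> T1))" for l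
    unfolding useq_def by simp
  have inv: "pu (useq l) \<and> useq l < useq (Suc l)" for l
  proof (induction l)
    case 0
    have "useq 0 < hi1" using u0 us0 unfolding pu_def by simp
    then have "\<exists>u. useq 0 < u \<and> u < hi1 \<and> (\<forall>y\<in>F1. R u y \<longleftrightarrow> y \<in> T1)" by (rule exu)
    then have "useq 0 < useq (Suc 0) \<and> useq (Suc 0) < hi1 \<and> (\<forall>y\<in>F1. R (useq (Suc 0)) y \<longleftrightarrow> y \<in> T1)"
      unfolding usS by (rule someI_ex)
    then show ?case using u0 us0 by simp
  next
    case (Suc l)
    have p1: "useq (Suc l) < hi1" "lo1 < useq (Suc l)" "\<forall>y\<in>F1. R (useq (Suc l)) y \<longleftrightarrow> y \<in> T1"
    proof -
      have "useq l < hi1" using Suc unfolding pu_def by simp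
      then have "\<exists>u. useq l < u \<and> u < hi1 \<and> (\<forall>y\<in>F1. R u y \<longleftrightarrow> y \<in> T1)" by (rule exu)
      then have h: "useq l < useq (Suc l) \<and> useq (Suc l) < hi1 \<and> (\<forall>y\<in>F1. R (useq (Suc l)) y \<longleftrightarrow> y \<in> T1)"
        unfolding usS by (rule someI_ex)
      then show "useq (Suc l) < hi1" "\<forall>y\<in>F1. R (useq (Suc l)) y \<longleftrightarrow> y \<in> T1" by simp_all
      show "lo1 < useq (Suc l)" using h Suc unfolding pu_def by simp
    qed
    then have "\<exists>u. useq (Suc l) < u \<and> u < hi1 \<and> (\<forall>y\<in>F1. R u y \<longleftrightarrow> y \<in> T1)" by (intro exu)
    then have "useq (Suc l) < useq (Suc (Suc l))"
      unfolding usS[of "Suc l"] by (rule someI2_ex) simp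
    then show ?case using p1 unfolding pu_def by simp
  qed
  have smono: "strict_mono useq" unfolding strict_mono_Suc_iff using inv by simp
  then have inj: "inj useq" by (rule strict_mono_imp_inj_on)
  have pus: "lo1 < useq l" "useq l < hi1" "\<forall>y\<in>F1. R (useq l) y \<longleftrightarrow> y \<in> T1" for l
    using inv[of l] unfolding pu_def by simp_all
  have exv: "\<exists>v. lo2 < v \<and> v < hi2 \<and> (\<forall>x\<in>F2. R x v \<longleftrightarrow> x \<in> T2) \<and> (\<forall>l<n. R (useq l) v \<longleftrightarrow> l \<in> S)"
    for n S
  proof -
    have fin: "finite (F2 \<union> useq ` {..<n})" using I(5) by simp
    have sub: "T2 \<union> useq ` {l. l < n \<and> l \<in> S} \<subseteq> F2 \<union> useq ` {..<n}" using I(6) by auto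
    obtain v where v: "lo2 < v" "v < hi2"
      and vR: "\<forall>x\<in>F2 \<union> useq ` {..<n}. R x v \<longleftrightarrow> x \<in> T2 \<union> useq ` {l. l < n \<and> l \<in> S}"
      using gstarV[OF G fin sub I(4)] by blast
    have notF2: "useq l \<notin> F2" for l using I(7) pus[of l] by auto
    have c1: "\<forall>x\<in>F2. R x v \<longleftrightarrow> x \<in> T2"
    proof
      fix x assume x: "x \<in> F2"
      then have "x \<notin> useq ` {l. l < n \<and> l \<in> S}" using notF2 by auto
      then show "R x v \<longleftrightarrow> x \<in> T2" using vR x by auto
    qed
    have c2: "\<forall>l<n. R (useq l) v \<longleftrightarrow> l \<in> S"
    proof (intro allI impI)
      fix l assume l: "l < n"
      have "useq l \<notin> T2" using notF2 I(6) by auto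
      moreover have "useq l \<in> useq ` {l. l < n \<and> l \<in> S} \<longleftrightarrow> l \<in> S"
        using inj l by (auto simp: inj_eq)
      ultimately show "R (useq l) v \<longleftrightarrow> l \<in> S" using vR l by auto
    qed
    show ?thesis using v c1 c2 by blast
  qed
  define vsel where "vsel n S = (SOME v. lo2 < v \<and> v < hi2 \<and> (\<forall>x\<in>F2. R x v \<longleftrightarrow> x \<in> T2) \<and> (\<forall>l<n. R (useq l) v \<longleftrightarrow> l \<in> S))" for n S
  have vs: "lo2 < vsel n S \<and> vsel n S < hi2 \<and> (\<forall>x\<in>F2. R x (vsel n S) \<longleftrightarrow> x \<in> T2) \<and> (\<forall>l<n. R (useq l) (vsel n S) \<longleftrightarrow> l \<in> S)"
    for n S unfolding vsel_def by (rule someI_ex[OF exv])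
  obtain U :: "nat filter" where U: "U \<noteq> bot" "U \<le> sequentially" "\<forall>P. eventually P U \<or> eventually (\<lambda>x. \<not> P x) U"
    using ex_ultra by blast
  define N where "N = upow U M"
  define h where "h = (\<lambda>x. ucls U M (\<lambda>_. x))"
  have emb: "elem_emb L M N h" unfolding N_def h_def by (rule upow_elem[OF M U(1,3)])
  define c where "c i = map h (a (useq i))" for i
  define d where "d S = map (\<lambda>m. ucls U M (\<lambda>n. b (vsel n S) ! m)) [0..<nb]" for S
  define W where "W i S n = a (useq i) @ b (vsel n S) @ ps" for i S n
  have lenW: "length (W i S n) = na + nb + length ps" for i S n unfolding W_def using la lb by simp
  have Wd: "W i S n ! k \<in> dom M" if "k < na + nb + length ps" for i S n k
  proof -
    have "set (W i S n) \<subseteq> dom M" unfolding W_def using la lb ps by auto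
    moreover have "W i S n ! k \<in> set (W i S n)" using that lenW by (intro nth_mem) simp
    ultimately show ?thesis by blast
  qed
  have WP: "(\<lambda>n. W i S n ! k) \<in> PiM M" if "k < na + nb + length ps" for i S k
    unfolding PiM_def using Wd[OF that] by simp
  have lenZ: "length (c i @ d S @ map h ps) = na + nb + length ps" for i S
    unfolding c_def d_def using la by simp
  have Zk: "(c i @ d S @ map h ps) ! k = ucls U M (\<lambda>n. W i S n ! k)" if k: "k < na + nb + length ps" for i S k
  proof -
    have lc: "length (c i) = na" unfolding c_def using la by simp
    have ld: "length (d S) = nb" unfolding d_def by simp
    consider "k < na" | "na \<le> k" "k < na + nb" | "na + nb \<le> k" by linarith
    then show ?thesis
    proof cases
      case 1
      have "(c i @ d S @ map h ps) ! k = c i ! k" using 1 lc by (simp add: nth_append)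
      also have "\<dots> = ucls U M (\<lambda>_. a (useq i) ! k)" unfolding c_def h_def using 1 la by simp
      finally show ?thesis unfolding W_def using 1 la by (simp add: nth_append)
    next
      case 2
      have kk: "k - na < nb" using 2 by simp
      have "(c i @ d S @ map h ps) ! k = d S ! (k - na)" using 2 lc ld kk by (simp add: nth_append)
      also have "\<dots> = ucls U M (\<lambda>n. b (vsel n S) ! (k - na))" unfolding d_def using 2 by simp
      moreover have "W i S n ! k = b (vsel n S) ! (k - na)" for n
        unfolding W_def using 2 kk la lb by (simp add: nth_append)
      ultimately show ?thesis by simp
    next
      case 3
      have kk: "\<not> k < na" "\<not> k - na < nb" "k - na - nb < length ps" using 3 k by simp_all
      have "(c i @ d S @ map h ps) ! k = map h ps ! (k - na - nb)" using kk lc ld by (simp add: nth_append)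
      also have "\<dots> = ucls U M (\<lambda>_. ps ! (k - na - nb))" unfolding h_def using kk by simp
      moreover have "W i S n ! k = ps ! (k - na - nb)" for n
        unfolding W_def using kk la lb by (simp add: nth_append)
      ultimately show ?thesis by simp
    qed
  qed
  have Zdom: "set (c i @ d S @ map h ps) \<subseteq> dom N" for i S
  proof
    fix z assume "z \<in> set (c i @ d S @ map h ps)"
    then obtain k where k: "k < length (c i @ d S @ map h ps)" "z = (c i @ d S @ map h ps) ! k"
      unfolding in_set_conv_nth by blast
    then have "k < na + nb + length ps" by (simp only: lenZ)
    then show "z \<in> dom N" unfolding k(2) Zk[OF \<open>k < na + nb + length ps\<close>] N_def upow_simps
      using WP by blast
  qed
  have main: "sat N (env (c i @ d S @ map h ps) e) \<psi> \<longleftrightarrow> i \<in> S" if e: "range e \<subseteq> dom N" for i S e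
  proof -
    let ?Z = "c i @ d S @ map h ps"
    let ?E = "\<lambda>n k. urep (env ?Z e k) n"
    have rZ: "range (env ?Z e) \<subseteq> dom N"
    proof
      fix z assume "z \<in> range (env ?Z e)"
      then obtain k where "z = env ?Z e k" by blast
      show "z \<in> dom N"
      proof (cases "k < length ?Z")
        case True
        then have "?Z ! k \<in> set ?Z" by (rule nth_mem)
        then show ?thesis using Zdom[of i S] \<open>z = env ?Z e k\<close> True unfolding env_def by auto
      next
        case False
        then show ?thesis using e \<open>z = env ?Z e k\<close> unfolding env_def by auto
      qed
    qed
    have "sat N (env ?Z e) \<psi> \<longleftrightarrow> eventually (\<lambda>n. sat M (?E n) \<psi>) U"
      unfolding N_def by (rule los[OF M U(1,3) rZ[unfolded N_def] wf])
    also have "\<dots> \<longleftrightarrow> eventually (\<lambda>n. i \<in> S) U"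
    proof (rule eventually_subst)
      have ev1: "eventually (\<lambda>n. \<forall>k\<in>{..<na + nb + length ps}. urep (?Z ! k) n = W i S n ! k) U"
      proof (rule eventually_ball_finite, simp, rule ballI)
        fix k assume "k \<in> {..<na + nb + length ps}"
        then have k: "k < na + nb + length ps" by simp
        show "eventually (\<lambda>n. urep (?Z ! k) n = W i S n ! k) U"
          unfolding Zk[OF k] by (rule urep_ucls[OF WP[OF k]])
      qed
      have ev2: "eventually (\<lambda>n. i < n) U"
        using U(2) by (rule filter_leD) (simp add: eventually_sequentially, rule exI[of _ "Suc i"], simp)
      show "eventually (\<lambda>n. sat M (?E n) \<psi> = (i \<in> S)) U"
        using ev1 ev2
      proof (rule eventually_elim2)
        fix n assume h1: "\<forall>k\<in>{..<na + nb + length ps}. urep (?Z ! k) n = W i S n ! k" and h2: "i < n"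
        have "sat M (?E n) \<psi> \<longleftrightarrow> sat M (env (W i S n) (?E n)) \<psi>"
        proof (rule sat_coinc, rule ballI)
          fix k assume "k \<in> fv \<psi>"
          then have k: "k < na + nb + length ps" using fv\<psi> by auto
          then have "k < length ?Z" "k < length (W i S n)" by (simp_all only: lenZ lenW)
          then show "?E n k = env (W i S n) (?E n) k"
            using h1 k by (simp add: env_def)
        qed
        also have "\<dots> \<longleftrightarrow> R (useq i) (vsel n S)"
          unfolding W_def
        proof (rule H)
          show "lo1 < useq i" "useq i < hi1" "\<forall>y\<in>F1. R (useq i) y \<longleftrightarrow> y \<in> T1" by (rule pus)+
          show "lo2 < vsel n S" "vsel n S < hi2" "\<forall>x\<in>F2. R x (vsel n S) \<longleftrightarrow> x \<in> T2" using vs by simp_all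
          show "range (?E n) \<subseteq> dom M"
          proof
            fix z assume "z \<in> range (?E n)"
            then obtain k where "z = ?E n k" by blast
            moreover have "env ?Z e k \<in> dom N" using rZ by blast
            ultimately show "z \<in> dom M" unfolding N_def by (simp add: urep_dom)
          qed
        qed
        also have "\<dots> \<longleftrightarrow> i \<in> S" using vs h2 by blast
        finally show "sat M (?E n) \<psi> = (i \<in> S)" by simp
      qed
    qed
    also have "\<dots> \<longleftrightarrow> i \<in> S" using U(1) by simp
    finally show ?thesis .
  qed
  show ?thesis
    unfolding has_IP_def
  proof (intro exI conjI)
    show "elem_emb L M N h" by (rule emb)
    show "\<forall>i. length (c i) = na \<and> set (c i) \<subseteq> dom N"
    proof
      fix i
      have "length (c i) = na" unfolding c_def using la by simp
      moreover have "set (c i) \<subseteq> dom N" using Zdom[of i "{}"] by simp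
      ultimately show "length (c i) = na \<and> set (c i) \<subseteq> dom N" by blast
    qed
    show "\<forall>S. length (d S) = nb \<and> set (d S) \<subseteq> dom N"
    proof
      fix S
      have "length (d S) = nb" unfolding d_def by simp
      moreover have "set (d S) \<subseteq> dom N" using Zdom[of 0 S] by simp
      ultimately show "length (d S) = nb \<and> set (d S) \<subseteq> dom N" by blast
    qed
    show "\<forall>i S e. range e \<subseteq> dom N \<longrightarrow> sat N (env (c i @ d S @ map h ps) e) \<psi> = (i \<in> S)"
      using main by blast
  qed
qed




lemma st_sat:
  assumes "same_type L M X Y" "wf_fm L \<psi>" "fv \<psi> \<subseteq> {..<length X}" "range e \<subseteq> dom M"
  shows "sat M (env X e) \<psi> = sat M (env Y e) \<psi>"
  using assms unfolding same_type_def by blast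

lemma sorted_nth_le:
  assumes "sorted_wrt (<) (us :: rat list)" "i < length us" "j < length us"
  shows "us ! i \<le> us ! j \<longleftrightarrow> i \<le> j"
proof -
  have lt: "us ! i < us ! j" if "i < j" "j < length us" for i j
    using assms(1) that sorted_wrt_nth_less by blast
  show ?thesis
  proof
    assume "us ! i \<le> us ! j"
    then show "i \<le> j" using lt[of j i] assms(2) by (cases "j < i") auto
  next
    assume "i \<le> j"
    then show "us ! i \<le> us ! j" using lt[of i j] assms(3) by (cases "i = j") auto
  qed
qed

lemma sorted_nth_eq:
  assumes "sorted_wrt (<) (us :: rat list)" "i < length us" "j < length us"
  shows "us ! i = us ! j \<longleftrightarrow> i = j"
  using sorted_nth_le[OF assms] sorted_nth_le[OF assms(1,3,2)] by auto

lemma nth_ts: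
  assumes "k < length us + length js"
  shows "(map Inl us @ map Inr js) ! k = (if k < length us then Inl (us ! k) else Inr (js ! (k - length us)))"
  using assms by (simp add: nth_append)

lemma LstarDefs_simps:
  "isU (Inl x) = True" "isU (Inr x) = False" "isV (Inl x) = False" "isV (Inr x) = True"
  "leU (Inl x) (Inl y) = (x \<le> y)" "leU (Inr x) s = False" "leU s (Inr x) = False"
  "leV (Inr x) (Inr y) = (x \<le> y)" "leV (Inl x) s = False" "leV s (Inl x) = False"
  "relG R (Inl x) (Inr y) = R x y" "relG R (Inr x) s = False" "relG R s (Inl x) = False"
  by (auto simp: isU_def isV_def leU_def leV_def relG_def)

lemma qftp_crit:
  assumes lu: "length us' = length us" and lj: "length js' = length js"
    and su: "sorted_wrt (<) us" and su': "sorted_wrt (<) us'"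
    and jo: "\<forall>q<length js. \<forall>q'<length js. (js ! q \<le> js ! q' \<longleftrightarrow> js' ! q \<le> js' ! q')"
    and ed: "\<forall>p<length us. \<forall>q<length js. R (us ! p) (js ! q) \<longleftrightarrow> R (us' ! p) (js' ! q)"
  shows "same_qftp R (map Inl us @ map Inr js) (map Inl us' @ map Inr js')"
  unfolding same_qftp_def
proof (intro conjI allI impI)
  show "length (map Inl us @ map Inr js) = length (map Inl us' @ map Inr js')" using lu lj by simp
  have jeq: "js ! q = js ! q' \<longleftrightarrow> js' ! q = js' ! q'" if "q < length js" "q' < length js" for q q'
    using jo that by (metis order_antisym order_refl)
  fix k assume k: "k < length (map Inl us @ map Inr js)"
  then have k': "k < length us + length js" "k < length us' + length js'" using lu lj by simp_all
  show "isU ((map Inl us @ map Inr js) ! k) = isU ((map Inl us' @ map Inr js') ! k)"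
    "isV ((map Inl us @ map Inr js) ! k) = isV ((map Inl us' @ map Inr js') ! k)"
    unfolding nth_ts[OF k'(1)] nth_ts[OF k'(2)] using lu by (simp_all add: LstarDefs_simps)
  fix l assume l: "l < length (map Inl us @ map Inr js)"
  then have l': "l < length us + length js" "l < length us' + length js'" using lu lj by simp_all
  note tt = nth_ts[OF k'(1)] nth_ts[OF k'(2)] nth_ts[OF l'(1)] nth_ts[OF l'(2)]
  have jo': "js ! q \<le> js ! q' \<longleftrightarrow> js' ! q \<le> js' ! q'" if "q < length js" "q' < length js" for q q'
    using jo that by blast
  have ed': "R (us ! p) (js ! q) \<longleftrightarrow> R (us' ! p) (js' ! q)" if "p < length us" "q < length js" for p q
    using ed that by blast
  have kl: "\<not> k < length us \<Longrightarrow> k - length us < length js" "\<not> l < length us \<Longrightarrow> l - length us < length js"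
    using k'(1) l'(1) by linarith+
  show "((map Inl us @ map Inr js) ! k = (map Inl us @ map Inr js) ! l) =
    ((map Inl us' @ map Inr js') ! k = (map Inl us' @ map Inr js') ! l)"
    unfolding tt lu
    by (cases "k < length us"; cases "l < length us")
      (simp_all add: sorted_nth_eq[OF su] sorted_nth_eq[OF su', unfolded lu] jeq kl)
  show "leU ((map Inl us @ map Inr js) ! k) ((map Inl us @ map Inr js) ! l) =
    leU ((map Inl us' @ map Inr js') ! k) ((map Inl us' @ map Inr js') ! l)"
    unfolding tt lu
    by (cases "k < length us"; cases "l < length us")
      (simp_all add: LstarDefs_simps sorted_nth_le[OF su] sorted_nth_le[OF su', unfolded lu])
  show "leV ((map Inl us @ map Inr js) ! k) ((map Inl us @ map Inr js) ! l) =
    leV ((map Inl us' @ map Inr js') ! k) ((map Inl us' @ map Inr js') ! l)"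
    unfolding tt lu
    by (cases "k < length us"; cases "l < length us") (simp_all add: LstarDefs_simps jo' kl)
  show "relG R ((map Inl us @ map Inr js) ! k) ((map Inl us @ map Inr js) ! l) =
    relG R ((map Inl us' @ map Inr js') ! k) ((map Inl us' @ map Inr js') ! l)"
    unfolding tt lu
    by (cases "k < length us"; cases "l < length us") (simp_all add: LstarDefs_simps ed' kl)
qed


lemma realize:
  assumes G: "gstar R" and J: "finite J"
  shows "\<exists>us. length us = n \<and> sorted_wrt (<) us \<and> (\<forall>p<n. \<forall>j\<in>J. R (us ! p) j \<longleftrightarrow> (p, j) \<in> E)"
proof -
  have "\<exists>us. length us = n \<and> (\<forall>p<n. of_nat p < us ! p \<and> us ! p < of_nat p + 1) \<and>
      (\<forall>p<n. \<forall>j\<in>J. R (us ! p) j \<longleftrightarrow> (p, j) \<in> E)"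
  proof (induction n)
    case 0 show ?case by simp
  next
    case (Suc n)
    then obtain us where us: "length us = n" "\<forall>p<n. of_nat p < us ! p \<and> us ! p < of_nat p + 1"
      "\<forall>p<n. \<forall>j\<in>J. R (us ! p) j \<longleftrightarrow> (p, j) \<in> E" by blast
    have sub: "{j \<in> J. (n, j) \<in> E} \<subseteq> J" by blast
    obtain u where u: "of_nat n < u" "u < of_nat n + 1" "\<forall>j\<in>J. R u j \<longleftrightarrow> j \<in> {j \<in> J. (n, j) \<in> E}"
      using gstarU[OF G J sub, of "of_nat n" "of_nat n + 1"] by auto
    show ?case
    proof (intro exI conjI allI impI ballI)
      show "length (us @ [u]) = Suc n" using us by simp
      fix p assume p: "p < Suc n"
      show "of_nat p < (us @ [u]) ! p" "(us @ [u]) ! p < of_nat p + 1"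
        using us u p by (cases "p < n"; simp add: nth_append)+
      fix j assume "j \<in> J"
      then show "R ((us @ [u]) ! p) j \<longleftrightarrow> (p, j) \<in> E"
        using us u p by (cases "p < n"; simp add: nth_append less_Suc_eq)
    qed
  qed
  then obtain us where us: "length us = n" "\<forall>p<n. of_nat p < us ! p \<and> us ! p < of_nat p + 1"
      "\<forall>p<n. \<forall>j\<in>J. R (us ! p) j \<longleftrightarrow> (p, j) \<in> E" by blast
  have "sorted_wrt (<) us"
    unfolding sorted_wrt_iff_nth_less
  proof (intro allI impI)
    fix i j assume ij: "i < j" "j < length us"
    then have "us ! i < of_nat i + 1" "of_nat j < us ! j" using us by auto
    moreover have "(of_nat i + 1 :: rat) \<le> of_nat j" using ij by simp
    ultimately show "us ! i < us ! j" by linarith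
  qed
  then show ?thesis using us by blast
qed

lemma chain_step:
  assumes "finite D"
  shows "f (B \<union> D) \<noteq> f B \<Longrightarrow> \<exists>E x. x \<notin> E \<and> x \<in> D \<and> E \<subseteq> B \<union> D \<and> f (insert x E) \<noteq> f E"
  using assms
proof (induction D rule: finite_induct)
  case empty then show ?case by simp
next
  case (insert x D)
  show ?case
  proof (cases "f (B \<union> D) = f B")
    case False
    then obtain E y where "y \<notin> E" "y \<in> D" "E \<subseteq> B \<union> D" "f (insert y E) \<noteq> f E" using insert.IH by blast
    then show ?thesis by blast
  next
    case True
    have eq: "B \<union> insert x D = insert x (B \<union> D)" by blast
    have ne: "f (insert x (B \<union> D)) \<noteq> f (B \<union> D)" using insert.prems True eq by simp
    then have "x \<notin> B \<union> D" by (metis insert_absorb)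
    then show ?thesis using ne by blast
  qed
qed

lemma chain2:
  assumes "finite E1" "finite E2" "f E1 \<noteq> f E2"
  shows "\<exists>E x. x \<notin> E \<and> x \<in> E1 \<union> E2 \<and> E \<subseteq> E1 \<union> E2 \<and> f (insert x E) \<noteq> f E"
proof -
  let ?C = "E1 \<inter> E2"
  have e1: "E1 = ?C \<union> (E1 - E2)" and e2: "E2 = ?C \<union> (E2 - E1)" by blast+
  have "f E1 \<noteq> f ?C \<or> f E2 \<noteq> f ?C" using assms(3) by metis
  then show ?thesis
  proof
    assume "f E1 \<noteq> f ?C"
    then have "f (?C \<union> (E1 - E2)) \<noteq> f ?C" using e1 by simp
    then obtain E x where "x \<notin> E \<and> x \<in> E1 - E2 \<and> E \<subseteq> ?C \<union> (E1 - E2) \<and> f (insert x E) \<noteq> f E"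
      using chain_step[of "E1 - E2" f ?C] assms(1) by blast
    then show ?thesis by blast
  next
    assume "f E2 \<noteq> f ?C"
    then have "f (?C \<union> (E2 - E1)) \<noteq> f ?C" using e2 by simp
    then obtain E x where "x \<notin> E \<and> x \<in> E2 - E1 \<and> E \<subseteq> ?C \<union> (E2 - E1) \<and> f (insert x E) \<noteq> f E"
      using chain_step[of "E2 - E1" f ?C] assms(2) by blast
    then show ?thesis by blast
  qed
qed

fun idxs :: "('i \<Rightarrow> 'a list) \<Rightarrow> 'i \<Rightarrow> 'i \<Rightarrow> nat \<Rightarrow> nat \<Rightarrow> 'i list \<Rightarrow> nat \<Rightarrow> nat list" where
  "idxs c u0 v0 na nb [] off = []"
| "idxs c u0 v0 na nb (t # ts) off =
    (if t = u0 then [0..<na] else if t = v0 then [na..<na + nb] else [off..<off + length (c t)])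
      @ idxs c u0 v0 na nb ts (off + length (c t))"

lemma idxs_ok:
  assumes lu: "length cu = na" and lv: "length cv = nb"
    and hu: "\<forall>i<na. i < length Y \<and> Y ! i = cu ! i"
    and hv: "\<forall>i<nb. na + i < length Y \<and> Y ! (na + i) = cv ! i"
  shows "(\<forall>m<length (concat (map c ts)). off + m < length Y \<and> Y ! (off + m) = concat (map c ts) ! m) \<Longrightarrow>
    map (nth Y) (idxs c u0 v0 na nb ts off) = concat (map (\<lambda>t. if t = u0 then cu else if t = v0 then cv else c t) ts)
    \<and> (\<forall>i\<in>set (idxs c u0 v0 na nb ts off). i < length Y)"
proof (induction ts arbitrary: off)
  case Nil then show ?case by simp
next
  case (Cons t ts)
  let ?rest = "concat (map c ts)"
  have H: "\<forall>m<length (c t @ ?rest). off + m < length Y \<and> Y ! (off + m) = (c t @ ?rest) ! m"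
    using Cons.prems by simp
  have Ht: "\<forall>m<length ?rest. off + length (c t) + m < length Y \<and> Y ! (off + length (c t) + m) = ?rest ! m"
  proof (intro allI impI)
    fix m assume m: "m < length ?rest"
    have "length (c t) + m < length (c t @ ?rest)" using m by simp
    then have "off + (length (c t) + m) < length Y \<and> Y ! (off + (length (c t) + m)) = (c t @ ?rest) ! (length (c t) + m)"
      using H by blast
    then show "off + length (c t) + m < length Y \<and> Y ! (off + length (c t) + m) = ?rest ! m"
      by (simp add: add.assoc)
  qed
  note IH = Cons.IH[OF Ht]
  have head: "map (nth Y) (if t = u0 then [0..<na] else if t = v0 then [na..<na + nb] else [off..<off + length (c t)])
      = (if t = u0 then cu else if t = v0 then cv else c t)
    \<and> (\<forall>i\<in>set (if t = u0 then [0..<na] else if t = v0 then [na..<na + nb] else [off..<off + length (c t)]). i < length Y)"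
  proof (cases "t = u0")
    case True
    have "map (nth Y) [0..<na] = cu" using hu lu by (intro nth_equalityI) auto
    moreover have "\<forall>i\<in>set [0..<na]. i < length Y" using hu by auto
    ultimately show ?thesis using True by simp
  next
    case F1: False
    show ?thesis
    proof (cases "t = v0")
      case True
      have "map (nth Y) [na..<na + nb] = cv" using hv lv by (intro nth_equalityI) auto
      moreover have "\<forall>i\<in>set [na..<na + nb]. i < length Y"
      proof
        fix i assume "i \<in> set [na..<na + nb]"
        then have "i - na < nb" "i = na + (i - na)" by auto
        then show "i < length Y" using hv by metis
      qed
      ultimately show ?thesis using True F1 by simp
    next
      case False
      have "map (nth Y) [off..<off + length (c t)] = c t"
      proof (rule nth_equalityI)
        show "length (map (nth Y) [off..<off + length (c t)]) = length (c t)" by simp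
        fix i assume "i < length (map (nth Y) [off..<off + length (c t)])"
        then have i: "i < length (c t)" by simp
        then have "i < length (c t @ ?rest)" by simp
        then have "Y ! (off + i) = (c t @ ?rest) ! i" using H by blast
        then show "map (nth Y) [off..<off + length (c t)] ! i = c t ! i" using i by (simp add: nth_append)
      qed
      moreover have "\<forall>i\<in>set [off..<off + length (c t)]. i < length Y"
      proof
        fix i assume "i \<in> set [off..<off + length (c t)]"
        then have "i - off < length (c t @ ?rest)" "i = off + (i - off)" by auto
        then show "i < length Y" using H by metis
      qed
      ultimately show ?thesis using F1 False by simp
    qed
  qed
  define hi where "hi = (if t = u0 then [0..<na] else if t = v0 then [na..<na + nb] else [off..<off + length (c t)])"
  define hv where "hv = (if t = u0 then cu else if t = v0 then cv else c t)"
  have e1: "idxs c u0 v0 na nb (t # ts) off = hi @ idxs c u0 v0 na nb ts (off + length (c t))"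
    unfolding hi_def by (simp only: idxs.simps)
  have e2: "concat (map (\<lambda>t. if t = u0 then cu else if t = v0 then cv else c t) (t # ts))
      = hv @ concat (map (\<lambda>t. if t = u0 then cu else if t = v0 then cv else c t) ts)"
    unfolding hv_def by simp
  show ?case unfolding e1 e2 using head[folded hi_def hv_def] IH by auto
qed

lemma sorted_upd:
  assumes s: "sorted_wrt (<) (us :: rat list)" and r: "r < length us"
    and lo: "0 < r \<longrightarrow> us ! (r - 1) < u" and hi: "r + 1 < length us \<longrightarrow> u < us ! (r + 1)"
  shows "sorted_wrt (<) (us[r := u])"
  unfolding sorted_wrt_iff_nth_less
proof (intro allI impI)
  fix i j assume ij: "i < j" "j < length (us[r := u])"
  then have j: "j < length us" by simp
  have le: "us ! i \<le> us ! j" if "i \<le> j" "j < length us" for i j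
    using sorted_nth_le[OF s, of i j] that by simp
  show "us[r := u] ! i < us[r := u] ! j"
  proof (cases "i = r")
    case True
    then have "j \<noteq> r" "r + 1 < length us" "us ! (r + 1) \<le> us ! j" using ij j le by auto
    then show ?thesis using True hi ij j by simp
  next
    case False
    show ?thesis
    proof (cases "j = r")
      case True
      then have "0 < r" "us ! i \<le> us ! (r - 1)" using ij le j by auto
      then show ?thesis using True False lo j by simp
    next
      case False2: False
      then show ?thesis using False ij j sorted_wrt_nth_less[OF s] by simp
    qed
  qed
qed

lemma len_concat_const:
  assumes "\<And>i. length (a i) = n"
  shows "length (concat (map a is)) = length is * n"
  using assms by (induction "is") auto




definition InterP :: "('f, 'r) lang \<Rightarrow> ('a, 'f, 'r) struc \<Rightarrow> (rat \<Rightarrow> rat \<Rightarrow> bool) \<Rightarrow>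
    (rat \<Rightarrow> 'a list) \<Rightarrow> (rat \<Rightarrow> 'a list) \<Rightarrow> nat \<Rightarrow> nat \<Rightarrow> bool" where
  "InterP L M R a b na nb \<longleftrightarrow> (\<exists>\<psi> ps lo1 hi1 F1 T1 lo2 hi2 F2 T2.
     wf_fm L \<psi> \<and> fv \<psi> \<subseteq> {..<na + nb + length ps} \<and> set ps \<subseteq> params a \<union> params b \<and>
     lo1 < hi1 \<and> finite F1 \<and> T1 \<subseteq> F1 \<and> lo2 < hi2 \<and> finite F2 \<and> T2 \<subseteq> F2 \<and>
     F2 \<inter> {lo1<..<hi1} = {} \<and> F1 \<inter> {lo2<..<hi2} = {} \<and>
     (\<forall>u v e. lo1 < u \<and> u < hi1 \<and> (\<forall>y\<in>F1. R u y \<longleftrightarrow> y \<in> T1) \<and>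
        lo2 < v \<and> v < hi2 \<and> (\<forall>x\<in>F2. R x v \<longleftrightarrow> x \<in> T2) \<and> range e \<subseteq> dom M \<longrightarrow>
        (sat M (env (a u @ b v @ ps) e) \<psi> \<longleftrightarrow> R u v)))"

lemma core:
  fixes M :: "('a, 'f, 'r) struc" and R :: "rat \<Rightarrow> rat \<Rightarrow> bool" and a b :: "rat \<Rightarrow> 'a list"
  assumes M: "is_struc L M" and G: "gstar R"
    and la: "\<And>i. length (a i) = na \<and> set (a i) \<subseteq> dom M"
    and lb: "\<And>j. length (b j) = nb \<and> set (b j) \<subseteq> dom M"
    and LI: "Lstar_indisc L M R (case_sum a b)"
    and NI: "\<not> order_indisc_over L M (params b) a"
  shows "InterP L M R a b na nb"
proof -
  define c where "c = case_sum a b"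
  define A where "A ts = concat (map c ts)" for ts
  have lena: "length (concat (map a is)) = length is * na" for "is"
    by (rule len_concat_const) (use la in blast)
  have lenb: "length (concat (map b js)) = length js * nb" for js
    by (rule len_concat_const) (use lb in blast)
  have Aeq: "A (map Inl us @ map Inr js) = concat (map a us) @ concat (map b js)" for us js
    unfolding A_def c_def by (simp add: o_def)
  have lenA: "length (A (map Inl us @ map Inr js)) = length us * na + length js * nb" for us js
    unfolding Aeq using lena lenb by simp
  obtain is1 is2 where s1: "sorted_wrt (<) is1" and s2: "sorted_wrt (<) is2" and l12: "length is1 = length is2"
    and nst: "\<not> same_type_over L M (params b) (concat (map a is1)) (concat (map a is2))"
    using NI unfolding order_indisc_over_def by blast
  define K where "K = length is1"
  have lX: "length (concat (map a is1)) = K * na" "length (concat (map a is2)) = K * na"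
    using lena l12 K_def by auto
  obtain qs where qs: "set qs \<subseteq> params b"
    and nst2: "\<not> same_type L M (concat (map a is1) @ qs) (concat (map a is2) @ qs)"
    using nst lX unfolding same_type_over_def by auto
  obtain \<phi> e where wf\<phi>: "wf_fm L \<phi>" and fv\<phi>: "fv \<phi> \<subseteq> {..<length (concat (map a is1) @ qs)}"
    and e: "range e \<subseteq> dom M"
    and dif: "sat M (env (concat (map a is1) @ qs) e) \<phi> \<noteq> sat M (env (concat (map a is2) @ qs) e) \<phi>"
    using nst2 lX unfolding same_type_def by auto
  have fv\<phi>2: "fv \<phi> \<subseteq> {..<length (concat (map a is2) @ qs)}" using fv\<phi> lX by simp
  define jof where "jof q = (SOME j. q \<in> set (b j))" for q
  have jof: "q \<in> set (b (jof q))" if "q \<in> set qs" for q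
  proof -
    have "\<exists>j. q \<in> set (b j)" using qs that unfolding params_def by blast
    then show ?thesis unfolding jof_def by (rule someI_ex)
  qed
  define js where "js = map jof qs"
  define B where "B = concat (map b js)"
  have qB: "q \<in> set B" if "q \<in> set qs" for q using jof[OF that] that unfolding B_def js_def by auto
  define pos where "pos q = (SOME i. i < length B \<and> B ! i = q)" for q
  have pos: "pos q < length B \<and> B ! pos q = q" if "q \<in> set qs" for q
  proof -
    have "\<exists>i. i < length B \<and> B ! i = q" using qB[OF that] by (simp add: in_set_conv_nth)
    then show ?thesis unfolding pos_def by (rule someI_ex)
  qed
  define idx1 where "idx1 = [0..<K * na] @ map (\<lambda>q. K * na + pos q) qs"
  have idx1: "(\<forall>i\<in>set idx1. i < length (X @ B)) \<and> map (nth (X @ B)) idx1 = X @ qs"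
    if X: "length X = K * na" for X
  proof
    show "\<forall>i\<in>set idx1. i < length (X @ B)" using X pos unfolding idx1_def by auto
    have m1: "map (nth (X @ B)) [0..<K * na] = X"
      by (rule nth_equalityI) (simp_all add: nth_append X)
    have m2: "map (nth (X @ B)) (map (\<lambda>q. K * na + pos q) qs) = qs"
      unfolding map_map
    proof (rule map_idI)
      fix q assume "q \<in> set qs"
      then show "(nth (X @ B) \<circ> (\<lambda>q. K * na + pos q)) q = q" using pos X by (simp add: nth_append)
    qed
    show "map (nth (X @ B)) idx1 = X @ qs" unfolding idx1_def map_append m1 m2 ..
  qed
  define \<psi>1 where "\<psi>1 = ren (nth idx1) \<phi>"
  define Lt where "Lt = K * na + length js * nb"
  have fv\<psi>1: "fv \<psi>1 \<subseteq> {..<Lt}"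
    using ren_nth(1)[OF conjunct1[OF idx1[OF lX(1)]] conjunct2[OF idx1[OF lX(1)]] fv\<phi>]
    unfolding \<psi>1_def Lt_def B_def using lX lenb by simp
  have wf\<psi>1: "wf_fm L \<psi>1" unfolding \<psi>1_def wf_ren by (rule wf\<phi>)
  have sat1: "sat M (env (concat (map a is1) @ B) e) \<psi>1 = sat M (env (concat (map a is1) @ qs) e) \<phi>"
    unfolding \<psi>1_def by (rule ren_nth(2)[OF conjunct1[OF idx1[OF lX(1)]] conjunct2[OF idx1[OF lX(1)]] fv\<phi>])
  have sat2: "sat M (env (concat (map a is2) @ B) e) \<psi>1 = sat M (env (concat (map a is2) @ qs) e) \<phi>"
    unfolding \<psi>1_def by (rule ren_nth(2)[OF conjunct1[OF idx1[OF lX(2)]] conjunct2[OF idx1[OF lX(2)]] fv\<phi>2])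
  define val where "val us = sat M (env (A (map Inl us @ map Inr js)) e) \<psi>1" for us
  define J where "J = set js"
  have finJ: "finite J" unfolding J_def by simp
  define real where "real E us \<longleftrightarrow> length us = K \<and> sorted_wrt (<) us \<and>
      (\<forall>p<K. \<forall>j\<in>J. R (us ! p) j \<longleftrightarrow> (p, j) \<in> E)" for E us
  have st: "sat M (env (A (map Inl us @ map Inr js')) e) \<psi>1 = sat M (env (A (map Inl us' @ map Inr js)) e) \<psi>1"
    if "length us = K" "length us' = K" "length js' = length js" "sorted_wrt (<) us" "sorted_wrt (<) us'"
       "\<forall>q<length js'. \<forall>q'<length js'. (js' ! q \<le> js' ! q' \<longleftrightarrow> js ! q \<le> js ! q')"
       "\<forall>p<length us. \<forall>q<length js'. R (us ! p) (js' ! q) \<longleftrightarrow> R (us' ! p) (js ! q)"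
    for us us' js'
  proof (rule st_sat)
    have "same_qftp R (map Inl us @ map Inr js') (map Inl us' @ map Inr js)"
      by (rule qftp_crit) (use that in simp_all)
    then show "same_type L M (A (map Inl us @ map Inr js')) (A (map Inl us' @ map Inr js))"
      using LI unfolding Lstar_indisc_def A_def c_def by blast
    show "wf_fm L \<psi>1" by (rule wf\<psi>1)
    show "fv \<psi>1 \<subseteq> {..<length (A (map Inl us @ map Inr js'))}" using fv\<psi>1 that(1,3) lenA Lt_def by simp
    show "range e \<subseteq> dom M" by (rule e)
  qed
  have wd: "val us = val us'" if "real E us" "real E us'" for E us us'
    unfolding val_def
  proof (rule st)
    show "length us = K" "length us' = K" "sorted_wrt (<) us" "sorted_wrt (<) us'"
      using that unfolding real_def by simp_all
    show "length js = length js" ..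
    show "\<forall>q<length js. \<forall>q'<length js. (js ! q \<le> js ! q' \<longleftrightarrow> js ! q \<le> js ! q')" by simp
    show "\<forall>p<length us. \<forall>q<length js. R (us ! p) (js ! q) \<longleftrightarrow> R (us' ! p) (js ! q)"
    proof (intro allI impI)
      fix p q assume p: "p < length us" and q: "q < length js"
      have jq: "js ! q \<in> J" unfolding J_def using q by simp
      have pK: "p < K" using p that unfolding real_def by simp
      show "R (us ! p) (js ! q) \<longleftrightarrow> R (us' ! p) (js ! q)"
        using that jq pK unfolding real_def by blast
    qed
  qed
  have exr: "\<exists>us. real E us" for E using realize[OF G finJ, of K E] unfolding real_def by blast
  define f where "f E = val (SOME us. real E us)" for E
  have fval: "f E = val us" if "real E us" for E us
  proof -
    have "real E (SOME us. real E us)" using exr[of E] by (rule someI_ex)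
    then show ?thesis unfolding f_def using wd that by blast
  qed
  define P1 where "P1 = {(p, j). p < K \<and> j \<in> J \<and> R (is1 ! p) j}"
  define P2 where "P2 = {(p, j). p < K \<and> j \<in> J \<and> R (is2 ! p) j}"
  have r1: "real P1 is1" unfolding real_def P1_def K_def using s1 by auto
  have r2: "real P2 is2" unfolding real_def P2_def K_def using s2 l12 by auto
  have fne: "f P1 \<noteq> f P2"
    using fval[OF r1] fval[OF r2] sat1 sat2 dif unfolding val_def Aeq B_def by simp
  have finP: "finite P1" "finite P2"
  proof -
    have "P1 \<subseteq> {..<K} \<times> J" "P2 \<subseteq> {..<K} \<times> J" unfolding P1_def P2_def by auto
    then show "finite P1" "finite P2" using finJ by (auto intro: finite_subset)
  qed
  obtain E1 x where x: "x \<notin> E1" "x \<in> P1 \<union> P2" and fx: "f (insert x E1) \<noteq> f E1"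
    using chain2[OF finP fne] by blast
  obtain r jst where xrj: "x = (r, jst)" by (cases x)
  have rK: "r < K" and jJ: "jst \<in> J" using x(2) unfolding xrj P1_def P2_def by auto
  obtain us1 where ru1: "real E1 us1" using exr by blast
  obtain us2 where ru2: "real (insert x E1) us2" using exr by blast
  have lu1: "length us1 = K" and su1: "sorted_wrt (<) us1"
    and pat1: "\<forall>p<K. \<forall>j\<in>J. R (us1 ! p) j \<longleftrightarrow> (p, j) \<in> E1"
    using ru1 unfolding real_def by auto
  have vus1: "val us1 = f E1" using fval[OF ru1] by simp
  have vus2: "val us2 = f (insert x E1)" using fval[OF ru2] by simp
  have ltK: "us1 ! i < us1 ! j" if "i < j" "j < K" for i j
    using sorted_wrt_nth_less[OF su1] that lu1 by simp
  have leK: "us1 ! i \<le> us1 ! j \<longleftrightarrow> i \<le> j" if "i < K" "j < K" for i j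
    using sorted_nth_le[OF su1] that lu1 by simp
  have eqK: "us1 ! i = us1 ! j \<longleftrightarrow> i = j" if "i < K" "j < K" for i j
    using sorted_nth_eq[OF su1] that lu1 by simp
  define lo1 where "lo1 = (if r = 0 then us1 ! 0 - 1 else us1 ! (r - 1))"
  define hi1 where "hi1 = (if r + 1 < K then us1 ! (r + 1) else us1 ! r + 1)"
  have lo1r: "lo1 < us1 ! r" unfolding lo1_def using ltK[of "r - 1" r] rK by auto
  have hi1r: "us1 ! r < hi1" unfolding hi1_def using ltK[of r "r + 1"] by auto
  have outside: "us1 ! p \<le> lo1 \<or> hi1 \<le> us1 ! p" if "p < K" "p \<noteq> r" for p
  proof (cases "p < r")
    case True
    then have "us1 ! p \<le> us1 ! (r - 1)" using leK[of p "r - 1"] rK by simp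
    then show ?thesis using True unfolding lo1_def by simp
  next
    case False
    then have "r + 1 < K" "us1 ! (r + 1) \<le> us1 ! p" using that leK[of "r + 1" p] by auto
    then show ?thesis unfolding hi1_def by simp
  qed
  define Jlo where "Jlo = {j \<in> J. j < jst}"
  define Jhi where "Jhi = {j \<in> J. jst < j}"
  define lo2 where "lo2 = (if Jlo = {} then jst - 1 else Max Jlo)"
  define hi2 where "hi2 = (if Jhi = {} then jst + 1 else Min Jhi)"
  have finlo: "finite Jlo" and finhi: "finite Jhi" unfolding Jlo_def Jhi_def using finJ by simp_all
  have lo2j: "lo2 < jst"
  proof (cases "Jlo = {}")
    case False
    then have "Max Jlo \<in> Jlo" using finlo by (rule Max_in[rotated])
    then show ?thesis using False unfolding lo2_def Jlo_def by simp
  qed (simp add: lo2_def)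
  have hi2j: "jst < hi2"
  proof (cases "Jhi = {}")
    case False
    then have "Min Jhi \<in> Jhi" using finhi by (rule Min_in[rotated])
    then show ?thesis using False unfolding hi2_def Jhi_def by simp
  qed (simp add: hi2_def)
  have Jout: "j \<le> lo2 \<or> hi2 \<le> j" if "j \<in> J" "j \<noteq> jst" for j
  proof (cases "j < jst")
    case True
    then have "j \<in> Jlo" using that unfolding Jlo_def by simp
    then have "j \<le> Max Jlo" "Jlo \<noteq> {}" using finlo by auto
    then show ?thesis unfolding lo2_def by simp
  next
    case False
    then have "j \<in> Jhi" using that unfolding Jhi_def by simp
    then have "Min Jhi \<le> j" "Jhi \<noteq> {}" using finhi by auto
    then show ?thesis unfolding hi2_def by simp
  qed
  define F1 where "F1 = J - {jst}"
  define T1 where "T1 = {j \<in> J. j \<noteq> jst \<and> (r, j) \<in> E1}"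
  define F2 where "F2 = (\<lambda>p. us1 ! p) ` ({..<K} - {r})"
  define T2 where "T2 = (\<lambda>p. us1 ! p) ` {p. p < K \<and> p \<noteq> r \<and> (p, jst) \<in> E1}"
  have dis2: "F2 \<inter> {lo1<..<hi1} = {}" unfolding F2_def using outside by fastforce
  have dis1: "F1 \<inter> {lo2<..<hi2} = {}" unfolding F1_def using Jout by fastforce
  have fin1: "finite F1" "T1 \<subseteq> F1" unfolding F1_def T1_def using finJ by auto
  have fin2: "finite F2" "T2 \<subseteq> F2" unfolding F2_def T2_def by auto
  define sw where "sw v j = (if j = jst then v else j)" for v j :: rat
  define u0 where "u0 = us1 ! r"
  define subst where "subst u v t = (if t = Inl u0 then Inl u else if t = Inr jst then Inr v else t)" for u v t
  define ts1 where "ts1 = map Inl us1 @ map Inr js"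
  define ps where "ps = A ts1"
  have mapsub: "map (subst u v) ts1 = map Inl (us1[r := u]) @ map Inr (map (sw v) js)" for u v
  proof -
    have "map (subst u v) (map Inl us1) = map Inl (us1[r := u])"
    proof (rule nth_equalityI)
      show "length (map (subst u v) (map Inl us1)) = length (map Inl (us1[r := u]))" by simp
      fix p assume "p < length (map (subst u v) (map Inl us1))"
      then have p: "p < K" using lu1 by simp
      show "map (subst u v) (map Inl us1) ! p = map Inl (us1[r := u]) ! p"
        using p lu1 eqK[OF p rK] unfolding subst_def u0_def by (cases "p = r") auto
    qed
    moreover have "map (subst u v) (map Inr js) = map Inr (map (sw v) js)"
      unfolding subst_def sw_def by auto
    ultimately show ?thesis unfolding ts1_def by simp
  qed
  define idx where "idx = idxs c (Inl u0) (Inr jst) na nb ts1 (na + nb)"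
  have RN: "(\<forall>i\<in>set idx. i < length (a u @ b v @ ps)) \<and> map (nth (a u @ b v @ ps)) idx = A (map (subst u v) ts1)" for u v
  proof -
    have au: "length (a u) = na" and bv: "length (b v) = nb" using la lb by auto
    have H: "map (nth (a u @ b v @ ps)) idx = concat (map (\<lambda>t. if t = Inl u0 then a u else if t = Inr jst then b v else c t) ts1)
      \<and> (\<forall>i\<in>set idx. i < length (a u @ b v @ ps))"
      unfolding idx_def
    proof (rule idxs_ok[OF au bv])
      show "\<forall>i<na. i < length (a u @ b v @ ps) \<and> (a u @ b v @ ps) ! i = a u ! i" using au by (simp add: nth_append)
      show "\<forall>i<nb. na + i < length (a u @ b v @ ps) \<and> (a u @ b v @ ps) ! (na + i) = b v ! i"
        using au bv by (simp add: nth_append)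
      show "\<forall>m<length (concat (map c ts1)). na + nb + m < length (a u @ b v @ ps) \<and>
          (a u @ b v @ ps) ! (na + nb + m) = concat (map c ts1) ! m"
        using au bv unfolding ps_def A_def by (simp add: nth_append)
    qed
    have "concat (map (\<lambda>t. if t = Inl u0 then a u else if t = Inr jst then b v else c t) ts1) = A (map (subst u v) ts1)"
      unfolding A_def map_map by (intro arg_cong[where f=concat] map_cong) (auto simp: subst_def c_def)
    then show ?thesis using H by simp
  qed
  have lenZ: "length (A (map (subst u v) ts1)) = Lt" for u v
    unfolding mapsub lenA Lt_def using lu1 by simp
  have lenY: "length (a u @ b v @ ps) = na + nb + length ps" for u v using la lb by simp
  define \<psi>2 where "\<psi>2 = (if f (insert x E1) then \<psi>1 else Neg \<psi>1)"
  have wf\<psi>2: "wf_fm L \<psi>2" unfolding \<psi>2_def using wf\<psi>1 by simp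
  have fv\<psi>2: "fv \<psi>2 \<subseteq> {..<Lt}" unfolding \<psi>2_def using fv\<psi>1 by simp
  define \<psi> where "\<psi> = ren (nth idx) \<psi>2"
  have fv\<psi>: "fv \<psi> \<subseteq> {..<na + nb + length ps}"
  proof -
    have "fv (ren (nth idx) \<psi>2) \<subseteq> {..<length (a u0 @ b jst @ ps)}"
      by (rule ren_nth(1)[OF conjunct1[OF RN] conjunct2[OF RN]]) (use fv\<psi>2 lenZ in simp)
    then show ?thesis unfolding \<psi>_def lenY .
  qed
  have wf\<psi>: "wf_fm L \<psi>" unfolding \<psi>_def wf_ren by (rule wf\<psi>2)
  have psub: "set ps \<subseteq> params a \<union> params b"
    unfolding ps_def A_def c_def params_def by (auto split: sum.splits)
  have KC: "sat M (env (A (map (subst u v) ts1)) e) \<psi>1 = (if R u v then f (insert x E1) else f E1)"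
    if u: "lo1 < u" "u < hi1" "\<forall>y\<in>F1. R u y \<longleftrightarrow> y \<in> T1"
      and v: "lo2 < v" "v < hi2" "\<forall>x\<in>F2. R x v \<longleftrightarrow> x \<in> T2" for u v
  proof -
    define Eref where "Eref = (if R u v then insert x E1 else E1)"
    define uref where "uref = (if R u v then us2 else us1)"
    have rr: "real Eref uref" unfolding Eref_def uref_def using ru1 ru2 by simp
    have lur: "length uref = K" and sur: "sorted_wrt (<) uref"
      and patr: "\<forall>p<K. \<forall>j\<in>J. R (uref ! p) j \<longleftrightarrow> (p, j) \<in> Eref"
      using rr unfolding real_def by auto
    have fr: "val uref = (if R u v then f (insert x E1) else f E1)"
      unfolding uref_def using vus1 vus2 by simp
    have sortu: "sorted_wrt (<) (us1[r := u])"
      by (rule sorted_upd[OF su1]) (use rK lu1 u in \<open>auto simp: lo1_def hi1_def\<close>)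
    have swle: "sw v j \<le> sw v j' \<longleftrightarrow> j \<le> j'" if "j \<in> J" "j' \<in> J" for j j'
      using Jout[OF that(1)] Jout[OF that(2)] lo2j hi2j v(1,2) unfolding sw_def by auto
    have "sat M (env (A (map Inl (us1[r := u]) @ map Inr (map (sw v) js))) e) \<psi>1
        = sat M (env (A (map Inl uref @ map Inr js)) e) \<psi>1"
    proof (rule st)
      show "length (us1[r := u]) = K" using lu1 by simp
      show "length uref = K" by (rule lur)
      show "length (map (sw v) js) = length js" by simp
      show "sorted_wrt (<) (us1[r := u])" by (rule sortu)
      show "sorted_wrt (<) uref" by (rule sur)
      show "\<forall>q<length (map (sw v) js). \<forall>q'<length (map (sw v) js).
          (map (sw v) js ! q \<le> map (sw v) js ! q' \<longleftrightarrow> js ! q \<le> js ! q')"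
        using swle unfolding J_def by simp
      show "\<forall>p<length (us1[r := u]). \<forall>q<length (map (sw v) js).
          R (us1[r := u] ! p) (map (sw v) js ! q) \<longleftrightarrow> R (uref ! p) (js ! q)"
      proof (intro allI impI)
        fix p q assume p: "p < length (us1[r := u])" and q: "q < length (map (sw v) js)"
        have pK: "p < K" using p lu1 by simp
        have qj: "q < length js" using q by simp
        have jq: "js ! q \<in> J" using qj unfolding J_def by simp
        have rhs: "R (uref ! p) (js ! q) \<longleftrightarrow> (p, js ! q) \<in> Eref" using patr pK jq by blast
        have mq: "map (sw v) js ! q = sw v (js ! q)" using qj by simp
        show "R (us1[r := u] ! p) (map (sw v) js ! q) \<longleftrightarrow> R (uref ! p) (js ! q)"
        proof (cases "p = r")
          case True
          have ur: "us1[r := u] ! p = u" using True rK lu1 by simp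
          show ?thesis
          proof (cases "js ! q = jst")
            case True2: True
            then show ?thesis using True ur mq rhs xrj x(1) unfolding Eref_def sw_def by auto
          next
            case False2: False
            have "js ! q \<in> F1" using jq False2 unfolding F1_def by simp
            then have "R u (js ! q) \<longleftrightarrow> (r, js ! q) \<in> E1" using u(3) False2 jq unfolding T1_def by auto
            then show ?thesis using True ur mq rhs xrj False2 unfolding Eref_def sw_def by auto
          qed
        next
          case False
          have up: "us1[r := u] ! p = us1 ! p" using False by simp
          show ?thesis
          proof (cases "js ! q = jst")
            case True2: True
            have inF2: "us1 ! p \<in> F2" using pK False unfolding F2_def by auto
            have "us1 ! p \<in> T2 \<longleftrightarrow> (p, jst) \<in> E1"
            proof
              assume "us1 ! p \<in> T2"
              then obtain p' where "p' < K" "p' \<noteq> r" "(p', jst) \<in> E1" "us1 ! p = us1 ! p'"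
                unfolding T2_def by auto
              then show "(p, jst) \<in> E1" using eqK[OF pK] by auto
            next
              assume "(p, jst) \<in> E1" then show "us1 ! p \<in> T2" using pK False unfolding T2_def by auto
            qed
            then have "R (us1 ! p) v \<longleftrightarrow> (p, jst) \<in> E1" using v(3) inF2 by auto
            then show ?thesis using up mq True2 rhs xrj False unfolding Eref_def sw_def by auto
          next
            case False2: False
            have "R (us1 ! p) (js ! q) \<longleftrightarrow> (p, js ! q) \<in> E1" using pat1 pK jq by blast
            then show ?thesis using up mq False2 rhs xrj unfolding Eref_def sw_def by auto
          qed
        qed
      qed
    qed
    then show ?thesis unfolding mapsub using fr unfolding val_def by simp
  qed
  show ?thesis
    unfolding InterP_def
  proof (intro exI conjI allI impI)
    show "wf_fm L \<psi>" by (rule wf\<psi>)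
    show "fv \<psi> \<subseteq> {..<na + nb + length ps}" by (rule fv\<psi>)
    show "set ps \<subseteq> params a \<union> params b" by (rule psub)
    show "lo1 < hi1" using lo1r hi1r by simp
    show "lo2 < hi2" using lo2j hi2j by simp
    show "finite F1" "T1 \<subseteq> F1" "finite F2" "T2 \<subseteq> F2" using fin1 fin2 by simp_all
    show "F2 \<inter> {lo1<..<hi1} = {}" "F1 \<inter> {lo2<..<hi2} = {}" using dis1 dis2 by simp_all
    fix u v :: rat and e' :: "nat \<Rightarrow> 'a"
    assume h: "lo1 < u \<and> u < hi1 \<and> (\<forall>y\<in>F1. R u y \<longleftrightarrow> y \<in> T1) \<and>
        lo2 < v \<and> v < hi2 \<and> (\<forall>x\<in>F2. R x v \<longleftrightarrow> x \<in> T2) \<and> range e' \<subseteq> dom M"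
    have "sat M (env (a u @ b v @ ps) e') \<psi> = sat M (env (A (map (subst u v) ts1)) e') \<psi>2"
      unfolding \<psi>_def by (rule ren_nth(2)[OF conjunct1[OF RN] conjunct2[OF RN]]) (use fv\<psi>2 lenZ in simp)
    also have "\<dots> = sat M (env (A (map (subst u v) ts1)) e) \<psi>2"
      by (rule env_irrel) (use fv\<psi>2 lenZ in simp)
    also have "\<dots> = R u v"
      using KC[of u v] h fx unfolding \<psi>2_def by (cases "R u v"; cases "f (insert x E1)") auto
    finally show "sat M (env (a u @ b v @ ps) e') \<psi> = R u v" .
  qed
qed




lemma gstar_swap:
  assumes "gstar R"
  shows "gstar (\<lambda>x y. R y x)"
proof -
  have h1: "\<forall>S T p q. finite S \<and> T \<subseteq> S \<and> p < q \<longrightarrow>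
        (\<exists>u. p < u \<and> u < q \<and> (\<forall>v\<in>S. R u v \<longleftrightarrow> v \<in> T))"
    and h2: "\<forall>S T p q. finite S \<and> T \<subseteq> S \<and> p < q \<longrightarrow>
        (\<exists>v. p < v \<and> v < q \<and> (\<forall>u\<in>S. R u v \<longleftrightarrow> u \<in> T))"
    using assms unfolding gstar_def by (rule conjunct1, rule conjunct2)
  show ?thesis unfolding gstar_def
  proof (rule conjI)
    show "\<forall>S T p q. finite S \<and> T \<subseteq> S \<and> p < q \<longrightarrow>
        (\<exists>u. p < u \<and> u < q \<and> (\<forall>v\<in>S. R v u \<longleftrightarrow> v \<in> T))" by (rule h2)
    show "\<forall>S T p q. finite S \<and> T \<subseteq> S \<and> p < q \<longrightarrow>
        (\<exists>v. p < v \<and> v < q \<and> (\<forall>u\<in>S. R v u \<longleftrightarrow> u \<in> T))" by (rule h1)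
  qed
qed

definition swp :: "rat + rat \<Rightarrow> rat + rat" where "swp = case_sum Inr Inl"

lemma swp_simps:
  "isU (swp t) = isV t" "isV (swp t) = isU t"
  "leU (swp t) (swp s) = leV t s" "leV (swp t) (swp s) = leU t s"
  "relG R (swp t) (swp s) = relG (\<lambda>x y. R y x) s t"
  "(swp t = swp s) = (t = s)"
  by (cases t; cases s; simp add: swp_def isU_def isV_def leU_def leV_def relG_def)+

lemma Lstar_swap:
  assumes "Lstar_indisc L M R (case_sum a b)"
  shows "Lstar_indisc L M (\<lambda>x y. R y x) (case_sum b a)"
  unfolding Lstar_indisc_def
proof (intro allI impI)
  fix ts ss assume q: "same_qftp (\<lambda>x y. R y x) ts ss"
  have cs: "case_sum b a = case_sum a b \<circ> swp"
  proof
    fix t show "case_sum b a t = (case_sum a b \<circ> swp) t" by (cases t) (simp_all add: swp_def)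
  qed
  have "same_qftp R (map swp ts) (map swp ss)"
    unfolding same_qftp_def
  proof (intro conjI allI impI)
    have len: "length ts = length ss" using q unfolding same_qftp_def by blast
    then show "length (map swp ts) = length (map swp ss)" by simp
    fix k assume k: "k < length (map swp ts)"
    then have k': "k < length ts" "k < length ss" using len by simp_all
    have qk: "(isU (ts ! k) \<longleftrightarrow> isU (ss ! k)) \<and> (isV (ts ! k) \<longleftrightarrow> isV (ss ! k))"
      using q k'(1) unfolding same_qftp_def by blast
    show "isU (map swp ts ! k) = isU (map swp ss ! k)" "isV (map swp ts ! k) = isV (map swp ss ! k)"
      using qk k' by (simp_all add: swp_simps)
    fix l assume l: "l < length (map swp ts)"
    then have l': "l < length ts" "l < length ss" using len by simp_all
    have qkl: "(ts ! k = ts ! l \<longleftrightarrow> ss ! k = ss ! l) \<and>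
        (leU (ts ! k) (ts ! l) \<longleftrightarrow> leU (ss ! k) (ss ! l)) \<and>
        (leV (ts ! k) (ts ! l) \<longleftrightarrow> leV (ss ! k) (ss ! l))"
      using q k'(1) l'(1) unfolding same_qftp_def by blast
    have qlk: "relG (\<lambda>x y. R y x) (ts ! l) (ts ! k) \<longleftrightarrow> relG (\<lambda>x y. R y x) (ss ! l) (ss ! k)"
      using q k'(1) l'(1) unfolding same_qftp_def by blast
    show "(map swp ts ! k = map swp ts ! l) = (map swp ss ! k = map swp ss ! l)"
      "leU (map swp ts ! k) (map swp ts ! l) = leU (map swp ss ! k) (map swp ss ! l)"
      "leV (map swp ts ! k) (map swp ts ! l) = leV (map swp ss ! k) (map swp ss ! l)"
      "relG R (map swp ts ! k) (map swp ts ! l) = relG R (map swp ss ! k) (map swp ss ! l)"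
      using qkl qlk k' l' by (simp_all add: swp_simps)
  qed
  then have "same_type L M (concat (map (case_sum a b) (map swp ts))) (concat (map (case_sum a b) (map swp ss)))"
    using assms unfolding Lstar_indisc_def by blast
  then show "same_type L M (concat (map (case_sum b a) ts)) (concat (map (case_sum b a) ss))"
    unfolding cs by (simp add: map_map)
qed

lemma swap_nth3:
  "map (nth (A @ B @ C)) ([length A..<length A + length B] @ [0..<length A] @
     [length A + length B..<length A + length B + length C]) = B @ A @ C"
proof -
  have 1: "map (nth (A @ B @ C)) [length A..<length A + length B] = B"
    by (rule nth_equalityI) (simp_all add: nth_append)
  have 2: "map (nth (A @ B @ C)) [0..<length A] = A"
    by (rule nth_equalityI) (simp_all add: nth_append)
  have 3: "map (nth (A @ B @ C)) [length A + length B..<length A + length B + length C] = C"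
    by (rule nth_equalityI) (simp_all add: nth_append)
  show ?thesis unfolding map_append 1 2 3 ..
qed

lemma InterP_swap:
  fixes M :: "('a, 'f, 'r) struc"
  assumes I: "InterP L M (\<lambda>x y. R y x) b a nb na"
    and la: "\<And>i. length (a i) = na" and lb: "\<And>j. length (b j) = nb"
  shows "InterP L M R a b na nb"
proof -
  obtain \<psi> ps lo1 hi1 F1 T1 lo2 hi2 F2 T2 where
    wf: "wf_fm L \<psi>" and fv: "fv \<psi> \<subseteq> {..<nb + na + length ps}" and ps: "set ps \<subseteq> params b \<union> params a"
    and c1: "lo1 < hi1" "finite F1" "T1 \<subseteq> F1" "lo2 < hi2" "finite F2" "T2 \<subseteq> F2"
      "F2 \<inter> {lo1<..<hi1} = {}" "F1 \<inter> {lo2<..<hi2} = {}"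
    and H: "\<forall>u v e. lo1 < u \<and> u < hi1 \<and> (\<forall>y\<in>F1. R y u \<longleftrightarrow> y \<in> T1) \<and>
        lo2 < v \<and> v < hi2 \<and> (\<forall>x\<in>F2. R v x \<longleftrightarrow> x \<in> T2) \<and> range e \<subseteq> dom M \<longrightarrow>
        (sat M (env (b u @ a v @ ps) e) \<psi> \<longleftrightarrow> R v u)"
    using I unfolding InterP_def by (elim exE conjE) (rule that, assumption+)
  define idx where "idx = [na..<na + nb] @ [0..<na] @ [na + nb..<na + nb + length ps]"
  have RN: "(\<forall>i\<in>set idx. i < length (a v @ b u @ ps)) \<and> map (nth (a v @ b u @ ps)) idx = b u @ a v @ ps" for u v
  proof
    show "\<forall>i\<in>set idx. i < length (a v @ b u @ ps)" unfolding idx_def using la lb by auto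
    show "map (nth (a v @ b u @ ps)) idx = b u @ a v @ ps"
      using swap_nth3[of "a v" "b u" ps] unfolding idx_def la lb .
  qed
  have fvX: "fv \<psi> \<subseteq> {..<length (b u @ a v @ ps)}" for u v
  proof -
    have "length (b u @ a v @ ps) = nb + na + length ps" using la lb by simp
    then show ?thesis using fv by (simp only:)
  qed
  define \<psi>' where "\<psi>' = ren (nth idx) \<psi>"
  show ?thesis unfolding InterP_def
  proof (intro exI conjI allI impI)
    show "wf_fm L \<psi>'" unfolding \<psi>'_def wf_ren by (rule wf)
    have "fv \<psi>' \<subseteq> {..<length (a 0 @ b 0 @ ps)}"
      unfolding \<psi>'_def by (rule ren_nth(1)[OF conjunct1[OF RN] conjunct2[OF RN] fvX])
    then show "fv \<psi>' \<subseteq> {..<na + nb + length ps}" using la lb by (simp add: add.assoc)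
    show "set ps \<subseteq> params a \<union> params b" using ps by blast
    show "lo2 < hi2" "finite F2" "T2 \<subseteq> F2" "lo1 < hi1" "finite F1" "T1 \<subseteq> F1"
      "F1 \<inter> {lo2<..<hi2} = {}" "F2 \<inter> {lo1<..<hi1} = {}" using c1 by simp_all
    fix u v :: rat and e :: "nat \<Rightarrow> 'a"
    assume h: "lo2 < u \<and> u < hi2 \<and> (\<forall>y\<in>F2. R u y \<longleftrightarrow> y \<in> T2) \<and>
        lo1 < v \<and> v < hi1 \<and> (\<forall>x\<in>F1. R x v \<longleftrightarrow> x \<in> T1) \<and> range e \<subseteq> dom M"
    have "sat M (env (a u @ b v @ ps) e) \<psi>' = sat M (env (b v @ a u @ ps) e) \<psi>"
      unfolding \<psi>'_def by (rule ren_nth(2)[OF conjunct1[OF RN] conjunct2[OF RN] fvX])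
    also have "\<dots> = R u v" by (rule H[rule_format]) (use h in simp)
    finally show "sat M (env (a u @ b v @ ps) e) \<psi>' = R u v" .
  qed
qed

theorem lemma2:
  fixes L :: "('f, 'r) lang" and M :: "('a, 'f, 'r) struc"
    and R :: "rat \<Rightarrow> rat \<Rightarrow> bool"
    and a b :: "rat \<Rightarrow> 'a list" and na nb :: nat
  assumes "is_struc L M"
    and "gstar R"
    and "\<And>i. length (a i) = na \<and> set (a i) \<subseteq> dom M"
    and "\<And>j. length (b j) = nb \<and> set (b j) \<subseteq> dom M"
    and "Lstar_indisc L M R (case_sum a b)"
  shows "mutually_indisc L M a b \<or>
    (\<exists>\<phi> ps. wf_fm L \<phi> \<and> fv \<phi> \<subseteq> {..<na + nb + length ps} \<and>
       set ps \<subseteq> params a \<union> params b \<and> has_IP L M \<phi> na nb ps)"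
proof (cases "mutually_indisc L M a b")
  case True
  then show ?thesis by blast
next
  case False
  have IP: "InterP L M R a b na nb"
  proof (cases "order_indisc_over L M (params b) a")
    case False
    then show ?thesis by (rule core[OF assms(1-5)])
  next
    case True
    then have NI: "\<not> order_indisc_over L M (params a) b"
      using \<open>\<not> mutually_indisc L M a b\<close> unfolding mutually_indisc_def by blast
    have "InterP L M (\<lambda>x y. R y x) b a nb na"
      by (rule core[OF assms(1) gstar_swap[OF assms(2)] assms(4) assms(3) Lstar_swap[OF assms(5)] NI])
    then show ?thesis by (rule InterP_swap) (use assms(3,4) in blast)+
  qed
  obtain \<psi> ps lo1 hi1 F1 T1 lo2 hi2 F2 T2 where
    wf: "wf_fm L \<psi>" and fv: "fv \<psi> \<subseteq> {..<na + nb + length ps}" and ps: "set ps \<subseteq> params a \<union> params b"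
    and c1: "lo1 < hi1" "finite F1" "T1 \<subseteq> F1" "lo2 < hi2" "finite F2" "T2 \<subseteq> F2"
      "F2 \<inter> {lo1<..<hi1} = {}"
    and H: "\<forall>u v e. lo1 < u \<and> u < hi1 \<and> (\<forall>y\<in>F1. R u y \<longleftrightarrow> y \<in> T1) \<and>
        lo2 < v \<and> v < hi2 \<and> (\<forall>x\<in>F2. R x v \<longleftrightarrow> x \<in> T2) \<and> range e \<subseteq> dom M \<longrightarrow>
        (sat M (env (a u @ b v @ ps) e) \<psi> \<longleftrightarrow> R u v)"
    using IP unfolding InterP_def by (elim exE conjE) (rule that, assumption+)
  have psd: "set ps \<subseteq> dom M"
  proof -
    have "params a \<subseteq> dom M" "params b \<subseteq> dom M" unfolding params_def using assms(3,4) by blast+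
    then show ?thesis using ps by blast
  qed
  have "has_IP L M \<psi> na nb ps"
    by (rule IP_lemma[OF assms(1,2,3,4) psd fv wf c1]) (rule H[rule_format], simp)
  then show ?thesis using wf fv ps by blast
qed


end
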